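(* Fix constants $\beta_\text{m}>0$, $\beta_\text{I}>0$, a target threshold $\gamma_\text{t}>0$, LoS probabilities $p_\text{L}(\theta_\text{m}),p_\text{L}(\theta_\text{I})\in[0,1]$ and Rician factors $K_\text{m}=K_\text{m}(\theta_\text{m})>0$, $K_\text{I}=K_\text{I}(\theta_\text{I})>0$. Let $h_\text{m},h_\text{I}$ be independent fading gains distributed as in the context (each link is independently LoS with probability $p_\text{L}(\theta_i)$ and NLoS otherwise), and let $\gamma=\frac{h_\text{m}\beta_\text{m}}{h_\text{I}\beta_\text{I}}$. Then the outage probability $p_\text{o}=\mathbb{P}[\gamma<\gamma_\text{t}]$ equals $$p_\text{o}=p_\text{L}(\theta_\text{m})p_\text{L}(\theta_\text{I})\,p_\text{o}^{(\text{L,L})}+p_\text{L}(\theta_\text{m})(1-p_\text{L}(\theta_\text{I}))\,p_\text{o}^{(\text{L,N})}+(1-p_\text{L}(\theta_\text{m}))p_\text{L}(\theta_\text{I})\,p_\text{o}^{(\text{N,L})}+(1-p_\text{L}(\theta_\text{m}))(1-p_\text{L}(\theta_\text{I}))\,p_\text{o}^{(\text{N,N})},$$ where $p_\text{o}^{(e_\text{m},e_\text{I})}=\mathbb{P}[\gamma<\gamma_\text{t}\mid \text{main link in environment } e_\text{m},\ \text{interference link in environment } e_\text{I}]$ is given by: (1) both LoS: $$p_\text{o}^{(\text{L,L})}=1-Q\!\left(\sqrt{\frac{2K_\text{m}\beta_\text{m}}{\beta_\text{m}+\gamma_\text{t}\beta_\text{I}}},\sqrt{\frac{2\gamma_\text{t}K_\text{I}\beta_\text{I}}{\beta_\text{m}+\gamma_\text{t}\beta_\text{I}}}\right)+\frac{\gamma_\text{t}\beta_\text{I}}{\beta_\text{m}+\gamma_\text{t}\beta_\text{I}}\exp\!\left(-\frac{K_\text{m}\beta_\text{m}+\gamma_\text{t}K_\text{I}\beta_\text{I}}{\beta_\text{m}+\gamma_\text{t}\beta_\text{I}}\right)I_0\!\left(\frac{2\beta_\text{m}}{\beta_\text{m}+\gamma_\text{t}\beta_\text{I}}\sqrt{\frac{\gamma_\text{t}K_\text{m}K_\text{I}\beta_\text{I}}{\beta_\text{m}}}\right);$$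 (2) main LoS, interference NLoS: $$p_\text{o}^{(\text{L,N})}=\frac{\gamma_\text{t}\beta_\text{I}}{2\beta_\text{m}+\gamma_\text{t}\beta_\text{I}}\exp\!\left(-\frac{2K_\text{m}\beta_\text{m}}{2\beta_\text{m}+\gamma_\text{t}\beta_\text{I}}\right);$$ (3) main NLoS, interference LoS: $$p_\text{o}^{(\text{N,L})}=1-\frac{\beta_\text{m}}{2\gamma_\text{t}\beta_\text{I}+\beta_\text{m}}\exp\!\left(-\frac{2\gamma_\text{t}K_\text{I}\beta_\text{I}}{2\gamma_\text{t}\beta_\text{I}+\beta_\text{m}}\right);$$ (4) both NLoS: $$p_\text{o}^{(\text{N,N})}=\frac{\gamma_\text{t}\beta_\text{I}}{\beta_\text{m}+\gamma_\text{t}\beta_\text{I}}.$$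
   Context: Model: a receiver gets a desired signal over the main link (index m) and an interfering signal over the interference link (index I). For $i\in\{\text{m},\text{I}\}$, $\beta_i=\ell_i^{-\alpha_i(\theta_i)}P_i>0$ is the average received power (link distance $\ell_i$, path-loss exponent $\alpha_i(\theta_i)$, transmit power $P_i$), and $\theta_i$ is the elevation angle of link $i$. The signal-to-interference ratio is $\gamma=\frac{h_\text{m}\beta_\text{m}}{h_\text{I}\beta_\text{I}}$, where $h_\text{m},h_\text{I}$ are independent random fading gains. Each link $i$ is, independently, in a LoS environment with probability $p_\text{L}(\theta_i)$ (in the paper $p_\text{L}(\theta)=\frac{1}{1+a_1\exp\{-b_1(\theta-a_1)\}}$) and in an NLoS environment with probability $1-p_\text{L}(\theta_i)$. Given LoS, $h_i$ has density $f_\text{L}(h)=\frac12\exp\!\left(-K_i-\frac h2\right)I_0\!\left(\sqrt{2K_ih}\right)$, $h\ge0$ (noncentral chi-squared with 2 degrees of freedom and noncentrality $2K_i$), where $K_i=K_i(\theta_i)>0$ is the Rician factor (in the paper $K(\theta)=a_3\exp(b_3\theta)$). Given NLoS, $h_i$ has density $f_\text{N}(h)=e^{-h}$, $h\ge0$. $I_0$ is the modified Bessel function of the first kind of order zero, and $Q(a,b)=\int_b^\infty x\exp\!\left(-\frac{x^2+a^2}{2}\right)I_0(ax)\,dx$ is the first-order Marcum Q-function. *)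

theory Defs
  imports "HOL-Probability.Probability"
begin

definition besselI0 :: "real \<Rightarrow> real" where
  "besselI0 x = (\<Sum>n. (x\<^sup>2 / 4) ^ n / (fact n)\<^sup>2)"

definition marcumQ :: "real \<Rightarrow> real \<Rightarrow> real" where
  "marcumQ a b = (LINT x:{b..}|lborel. x * exp (- (x\<^sup>2 + a\<^sup>2) / 2) * besselI0 (a * x))"

text \<open>LoS fading density (noncentral chi-squared, 2 dof, noncentrality 2K), zero for h < 0.\<close>
definition fLoS :: "real \<Rightarrow> real \<Rightarrow> real" where
  "fLoS K h = (if 0 \<le> h then 1/2 * exp (- K - h / 2) * besselI0 (sqrt (2 * K * h)) else 0)"

definition fNLoS :: "real \<Rightarrow> real" where
  "fNLoS h = (if 0 \<le> h then exp (- h) else 0)"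

definition po_LL :: "real \<Rightarrow> real \<Rightarrow> real \<Rightarrow> real \<Rightarrow> real \<Rightarrow> real" where
  "po_LL bm bI gt Km KI =
     1 - marcumQ (sqrt (2 * Km * bm / (bm + gt * bI))) (sqrt (2 * gt * KI * bI / (bm + gt * bI)))
     + gt * bI / (bm + gt * bI) * exp (- (Km * bm + gt * KI * bI) / (bm + gt * bI))
       * besselI0 (2 * bm / (bm + gt * bI) * sqrt (gt * Km * KI * bI / bm))"

definition po_LN :: "real \<Rightarrow> real \<Rightarrow> real \<Rightarrow> real \<Rightarrow> real" where
  "po_LN bm bI gt Km = gt * bI / (2 * bm + gt * bI) * exp (- (2 * Km * bm) / (2 * bm + gt * bI))"

definition po_NL :: "real \<Rightarrow> real \<Rightarrow> real \<Rightarrow> real \<Rightarrow> real" where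
  "po_NL bm bI gt KI = 1 - bm / (2 * gt * bI + bm) * exp (- (2 * gt * KI * bI) / (2 * gt * bI + bm))"

definition po_NN :: "real \<Rightarrow> real \<Rightarrow> real \<Rightarrow> real" where
  "po_NN bm bI gt = gt * bI / (bm + gt * bI)"

end

theory Submission
  imports Defs "HOL-Real_Asymp.Real_Asymp"
begin


definition pois :: "real \<Rightarrow> nat \<Rightarrow> real" where
  "pois K n = exp (- K) * K ^ n / fact n"

definition bin :: "nat \<Rightarrow> real \<Rightarrow> nat \<Rightarrow> real" where
  "bin N r k = real (N choose k) * r ^ k * (1 - r) ^ (N - k)"

definition Wt :: "real \<Rightarrow> nat \<Rightarrow> nat \<Rightarrow> real" where
  "Wt q k j = (if k < j then 1 else if k = j then q else 0)"

lemma pois_nonneg: "0 \<le> K \<Longrightarrow> 0 \<le> pois K n"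
  by (simp add: pois_def)

lemma bin_nonneg: "0 \<le> r \<Longrightarrow> r \<le> 1 \<Longrightarrow> 0 \<le> bin N r k"
  by (simp add: bin_def)

lemma Wt_nonneg: "0 \<le> q \<Longrightarrow> 0 \<le> Wt q k j"
  by (simp add: Wt_def)

lemma ennreal_suminf_swap:
  fixes f :: "nat \<Rightarrow> nat \<Rightarrow> ennreal"
  shows "(\<Sum>i. \<Sum>j. f i j) = (\<Sum>j. \<Sum>i. f i j)"
proof -
  have "(\<Sum>i. \<Sum>j. f i j) = (\<Sum>i. \<integral>\<^sup>+j. f i j \<partial>count_space UNIV)"
    by (simp add: nn_integral_count_space_nat)
  also have "\<dots> = (\<integral>\<^sup>+j. (\<Sum>i. f i j) \<partial>count_space UNIV)"
    by (rule nn_integral_suminf[symmetric]) simp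
  also have "\<dots> = (\<Sum>j. \<Sum>i. f i j)"
    by (simp add: nn_integral_count_space_nat)
  finally show ?thesis .
qed

lemma pois_sums: "pois K sums 1"
proof -
  have "(\<lambda>n. exp (-K) * (K ^ n /\<^sub>R fact n)) sums (exp (-K) * exp K)"
    by (intro sums_mult exp_converges)
  moreover have "(\<lambda>n. exp (-K) * (K ^ n /\<^sub>R fact n)) = pois K"
    by (rule ext) (simp add: pois_def divide_inverse ac_simps)
  moreover have "exp (-K) * exp K = 1" by (simp add: mult_exp_exp)
  ultimately show ?thesis by simp
qed

lemma thinning:
  assumes "0 \<le> K" "0 \<le> r" "r \<le> 1"
  shows "(\<lambda>m. pois K m * bin m r k) sums pois (K * r) k"
proof -
  have eq: "pois K (l + k) * bin (l + k) r k
      = (exp (-K) * (K * r) ^ k / fact k) * ((K * (1 - r)) ^ l /\<^sub>R fact l)" for l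
  proof -
    have "real (l + k choose k) = fact (l + k) / (fact k * fact l)"
      by (subst binomial_fact) auto
    moreover have "(K * (1 - r)) ^ l = K ^ l * (1 - r) ^ l" by (rule power_mult_distrib)
    ultimately show ?thesis
      unfolding pois_def bin_def by (simp add: power_add field_simps)
  qed
  have "(\<lambda>l. (exp (-K) * (K * r) ^ k / fact k) * ((K * (1 - r)) ^ l /\<^sub>R fact l))
      sums ((exp (-K) * (K * r) ^ k / fact k) * exp (K * (1 - r)))"
    by (intro sums_mult exp_converges)
  moreover have "(exp (-K) * (K * r) ^ k / fact k) * exp (K * (1 - r)) = pois (K * r) k"
    by (simp add: pois_def mult_exp_exp algebra_simps)
  ultimately have "(\<lambda>l. pois K (l + k) * bin (l + k) r k) sums pois (K * r) k"
    unfolding eq by simp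
  then have "(\<lambda>m. pois K m * bin m r k) sums (pois (K * r) k + (\<Sum>i<k. pois K i * bin i r k))"
    by (rule sums_iff_shift[THEN iffD1])
  moreover have "(\<Sum>i<k. pois K i * bin i r k) = 0"
    by (intro sum.neutral) (simp add: bin_def)
  ultimately show ?thesis by simp
qed



lemma bin_0_right: "bin n q 0 = (1 - q) ^ n" by (simp add: bin_def)
lemma bin_0_left: "bin 0 q k = (if k = 0 then 1 else 0)" by (simp add: bin_def)

lemma bin_gt: "n < k \<Longrightarrow> bin n q k = 0" by (simp add: bin_def)

lemma bin_Suc_Suc: "bin (Suc n) q (Suc k) = (1 - q) * bin n q (Suc k) + q * bin n q k"
proof (cases "Suc k \<le> n")
  case True
  then have "Suc n - Suc k = Suc (n - Suc k)" "n - k = Suc (n - Suc k)" by auto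
  then show ?thesis using True by (simp add: bin_def algebra_simps)
next
  case False
  show ?thesis
  proof (cases "k = n")
    case True then show ?thesis by (simp add: bin_def binomial_eq_0)
  next
    case False
    with \<open>\<not> Suc k \<le> n\<close> have "n < k" by auto
    then show ?thesis by (simp add: bin_def binomial_eq_0)
  qed
qed

lemma bin_Suc_0: "bin (Suc n) q 0 = (1 - q) * bin n q 0" by (simp add: bin_def)

definition V :: "real \<Rightarrow> nat \<Rightarrow> nat \<Rightarrow> real" where
  "V q k n = (\<Sum>j\<le>n. bin n q j * Wt q k j)"

lemma Wt_Suc: "Wt q k (Suc j) = Wt q k j + (if k = j then 1 - q else 0) + (if k = Suc j then q else 0)"
  by (auto simp: Wt_def)

lemma V_Suc: "V q k (Suc n) = V q k n + q * bin (Suc n) q k"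
proof -
  have "V q k (Suc n) = bin (Suc n) q 0 * Wt q k 0 + (\<Sum>j\<le>n. bin (Suc n) q (Suc j) * Wt q k (Suc j))"
    unfolding V_def by (rule sum.atMost_Suc_shift)
  also have "\<dots> = (1 - q) * bin n q 0 * Wt q k 0
      + (\<Sum>j\<le>n. (1 - q) * bin n q (Suc j) * Wt q k (Suc j))
      + (\<Sum>j\<le>n. q * bin n q j * Wt q k (Suc j))"
    unfolding bin_Suc_Suc bin_Suc_0 add.assoc sum.distrib[symmetric]
    by (simp add: algebra_simps)
  also have "(1 - q) * bin n q 0 * Wt q k 0 + (\<Sum>j\<le>n. (1 - q) * bin n q (Suc j) * Wt q k (Suc j))
      = (\<Sum>j\<le>Suc n. (1 - q) * bin n q j * Wt q k j)"
    by (rule sum.atMost_Suc_shift[symmetric])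
  also have "\<dots> = (1 - q) * V q k n"
    by (simp add: V_def bin_gt sum_distrib_left mult.assoc)
  also have "(\<Sum>j\<le>n. q * bin n q j * Wt q k (Suc j))
      = q * V q k n + q * (\<Sum>j\<le>n. bin n q j * (if k = j then 1 - q else 0))
          + q * (\<Sum>j\<le>n. bin n q j * (if k = Suc j then q else 0))"
    by (simp add: Wt_Suc V_def sum.distrib sum_distrib_left algebra_simps)
  also have "(\<Sum>j\<le>n. bin n q j * (if k = j then 1 - q else 0)) = (1 - q) * bin n q k"
    by (cases "k \<le> n") (auto simp: bin_gt if_distrib[of "\<lambda>x. bin n q _ * x"] sum.delta' cong: if_cong)
  also have "(\<Sum>j\<le>n. bin n q j * (if k = Suc j then q else 0)) = (if k = 0 then 0 else q * bin n q (k - 1))"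
  proof (cases k)
    case 0 then show ?thesis by simp
  next
    case (Suc k')
    have "(\<Sum>j\<le>n. bin n q j * (if k = Suc j then q else 0)) = (\<Sum>j\<le>n. if j = k' then bin n q j * q else 0)"
      using Suc by (intro sum.cong) auto
    also have "\<dots> = q * bin n q k'"
      by (cases "k' \<le> n") (auto simp: bin_gt)
    finally show ?thesis using Suc by simp
  qed
  finally have h1: "V q k (Suc n) = (1 - q) * V q k n + (q * V q k n + q * ((1 - q) * bin n q k) +
     q * (if k = 0 then 0 else q * bin n q (k - 1)))" .
  have h2: "bin (Suc n) q k = (1 - q) * bin n q k + (if k = 0 then 0 else q * bin n q (k - 1))"
    by (cases k) (auto simp: bin_Suc_Suc bin_Suc_0)
  show ?thesis unfolding h2 h1 by (simp add: algebra_simps)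
qed

lemma V_0: "V q k 0 = (if k = 0 then q else 0)"
  by (simp add: V_def bin_def Wt_def)

definition LHSfin :: "real \<Rightarrow> nat \<Rightarrow> nat \<Rightarrow> real" where
  "LHSfin q m n = (\<Sum>i\<le>n. real (m + i choose i) * q ^ Suc m * (1 - q) ^ i)"

definition RHSfin :: "real \<Rightarrow> nat \<Rightarrow> nat \<Rightarrow> real" where
  "RHSfin q m n = (\<Sum>k\<le>m. bin m (1 - q) k * V q k n)"

lemma choose_sum_sym: "(\<Sum>k\<le>m. (m choose k) * (N choose k)) = (m + N) choose m"
proof -
  have "(\<Sum>k\<le>m. (m choose k) * (N choose k)) = (\<Sum>k\<le>m. (m choose (m - k)) * (N choose k))"
    by (rule sum.cong; simp add: binomial_symmetric[symmetric])
  also have "\<dots> = (\<Sum>k\<le>m. (m choose k) * (N choose (m - k)))"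
    by (rule sum.reindex_bij_witness[of _ "\<lambda>k. m - k" "\<lambda>k. m - k"]) auto
  also have "\<dots> = (m + N) choose m" by (rule vandermonde)
  finally show ?thesis .
qed

lemma bin_prod: "k \<le> m \<Longrightarrow> bin m (1 - q) k * bin N q k = q ^ m * (1 - q) ^ N * real ((m choose k) * (N choose k))"
proof (cases "k \<le> N")
  case True
  assume "k \<le> m"
  have "q ^ (m - k) * q ^ k = q ^ m" "(1 - q) ^ k * (1 - q) ^ (N - k) = (1 - q) ^ N"
    using True \<open>k \<le> m\<close> by (simp_all add: power_add[symmetric])
  then show ?thesis
    by (simp add: bin_def algebra_simps)
next
  case False
  then show ?thesis by (simp add: bin_def)
qed

lemma fin_identity: "LHSfin q m n = RHSfin q m n"
proof (induction n)
  case 0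
  have "RHSfin q m 0 = bin m (1 - q) 0 * q"
    unfolding RHSfin_def V_0 by (simp add: if_distrib[of "\<lambda>x. _ * x"] sum.delta cong: if_cong)
  then show ?case by (simp add: LHSfin_def bin_def)
next
  case (Suc n)
  have "RHSfin q m (Suc n) = RHSfin q m n + q * (\<Sum>k\<le>m. bin m (1 - q) k * bin (Suc n) q k)"
    by (simp add: RHSfin_def V_Suc sum.distrib sum_distrib_left algebra_simps)
  also have "(\<Sum>k\<le>m. bin m (1 - q) k * bin (Suc n) q k)
      = q ^ m * (1 - q) ^ Suc n * real (\<Sum>k\<le>m. (m choose k) * (Suc n choose k))"
    by (simp add: bin_prod sum_distrib_left)
  also have "(\<Sum>k\<le>m. (m choose k) * (Suc n choose k)) = (m + n choose n) + (m + n choose Suc n)"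
  proof -
    have a: "(\<Sum>k\<le>m. (m choose k) * (Suc n choose k)) = (m + Suc n) choose m" by (rule choose_sum_sym)
    have b: "Suc (m + n) choose m = Suc (m + n) choose Suc n"
      using binomial_symmetric[of m "Suc (m + n)"] by simp
    show ?thesis using a b binomial_Suc_Suc[of "m + n" n] by (simp del: binomial_Suc_Suc)
  qed
  finally show ?case
    using Suc by (simp add: LHSfin_def algebra_simps)
qed



definition mix :: "real \<Rightarrow> real \<Rightarrow> real \<Rightarrow> real" where
  "mix K r h = (\<Sum>n. pois K n * erlang_density n r h)"

lemma summable_bessel: "summable (\<lambda>n. x ^ n / (fact n)\<^sup>2 :: real)"
proof (rule summable_comparison_test[OF _ summable_exp[of "\<bar>x\<bar>"]])
  show "\<exists>N. \<forall>n\<ge>N. norm (x ^ n / (fact n)\<^sup>2) \<le> inverse (fact n) * \<bar>x\<bar> ^ n"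
  proof (intro exI allI impI)
    fix n :: nat
    have "(1::real) \<le> fact n" by simp
    then have "fact n \<le> (fact n :: real)\<^sup>2" by (simp add: power2_eq_square)
    then have "\<bar>x\<bar> ^ n / (fact n)\<^sup>2 \<le> \<bar>x\<bar> ^ n / fact n"
      by (intro divide_left_mono) auto
    then show "norm (x ^ n / (fact n)\<^sup>2) \<le> inverse (fact n) * \<bar>x\<bar> ^ n"
      by (simp add: abs_mult power_abs divide_inverse mult.commute)
  qed
qed

lemma pois_erl: "0 \<le> h \<Longrightarrow> pois K n * erlang_density n r h
   = (exp (- K) * r * exp (- r * h)) * ((K * r * h) ^ n / (fact n)\<^sup>2)"
  by (simp add: pois_def erlang_density_def power2_eq_square power_mult_distrib)

lemma erl_neg: "h < 0 \<Longrightarrow> erlang_density n r h = 0"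
  by (simp add: erlang_density_def)

lemma mix_summable: "summable (\<lambda>n. pois K n * erlang_density n r h)"
proof (cases "0 \<le> h")
  case True
  then show ?thesis unfolding pois_erl[OF True]
    by (intro summable_mult summable_bessel)
next
  case False then show ?thesis by (simp add: erl_neg)
qed

lemma mix_neg: "h < 0 \<Longrightarrow> mix K r h = 0"
  by (simp add: mix_def erl_neg)

lemma mix_nonneg: "0 \<le> K \<Longrightarrow> 0 \<le> r \<Longrightarrow> 0 \<le> mix K r h"
  unfolding mix_def by (intro suminf_nonneg mix_summable mult_nonneg_nonneg pois_nonneg erlang_density_nonneg)

lemma mix_enn: "0 \<le> K \<Longrightarrow> 0 \<le> r \<Longrightarrow>
   ennreal (mix K r h) = (\<Sum>n. ennreal (pois K n * erlang_density n r h))"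
  unfolding mix_def
  by (rule suminf_ennreal2[symmetric]) (auto intro: mix_summable mult_nonneg_nonneg pois_nonneg)

lemma mix_measurable[measurable]: "mix K r \<in> borel_measurable borel"
  unfolding mix_def[abs_def] by measurable

lemma besselI0_measurable[measurable]: "besselI0 \<in> borel_measurable borel"
  unfolding besselI0_def[abs_def] by measurable

lemma fLoS_mix: "0 \<le> K \<Longrightarrow> fLoS K h = mix K (1/2) h"
proof (cases "0 \<le> h")
  case True
  assume K: "0 \<le> K"
  have "mix K (1/2) h = (\<Sum>n. (exp (- K) * (1/2) * exp (- (1/2) * h)) * ((K * (1/2) * h) ^ n / (fact n)\<^sup>2))"
    unfolding mix_def pois_erl[OF True] ..
  also have "\<dots> = (exp (- K) * (1/2) * exp (- (1/2) * h)) * (\<Sum>n. (K * (1/2) * h) ^ n / (fact n)\<^sup>2)"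
    by (rule suminf_mult[OF summable_bessel])
  also have "(\<Sum>n. (K * (1/2) * h) ^ n / (fact n)\<^sup>2) = besselI0 (sqrt (2 * K * h))"
    unfolding besselI0_def using True K by simp
  finally show ?thesis using True
    by (simp add: fLoS_def mult_exp_exp algebra_simps)
next
  case False then show ?thesis by (simp add: fLoS_def mix_neg)
qed

lemma pois_0: "pois 0 n = (if n = 0 then 1 else 0)"
  by (simp add: pois_def)

lemma fNLoS_mix: "fNLoS h = mix 0 1 h"
proof -
  have "mix 0 1 h = (\<Sum>n\<in>{0}. pois 0 n * erlang_density n 1 h)"
    unfolding mix_def by (rule suminf_finite) (auto simp: pois_0)
  then show ?thesis by (simp add: pois_0 erlang_density_def fNLoS_def)
qed

lemma fLoS_nonneg: "0 \<le> K \<Longrightarrow> 0 \<le> fLoS K h"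
  using mix_nonneg[of K "1/2" h] fLoS_mix[of K h] by simp

lemma fNLoS_nonneg: "0 \<le> fNLoS h"
  by (simp add: fNLoS_def)

lemma fLoS_measurable[measurable]: "fLoS K \<in> borel_measurable borel"
  unfolding fLoS_def[abs_def] by measurable

lemma fNLoS_measurable[measurable]: "fNLoS \<in> borel_measurable borel"
  unfolding fNLoS_def[abs_def] by measurable

lemma erlang_total: "0 < r \<Longrightarrow> (\<integral>\<^sup>+x. ennreal (erlang_density n r x) \<partial>lborel) = 1"
  using nn_integral_erlang_ith_moment[of r n 0] by simp

lemma erlang_tail:
  assumes r: "0 < r" and t: "0 \<le> t"
  shows "(\<integral>\<^sup>+x. ennreal (erlang_density n r x) * indicator {t<..} x \<partial>lborel)
       = ennreal (\<Sum>i\<le>n. (r * t) ^ i * exp (- r * t) / fact i)"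
proof -
  let ?S = "\<Sum>i\<le>n. (r * t) ^ i * exp (- r * t) / fact i"
  have cdf: "erlang_CDF n r t = 1 - ?S" using t by (simp add: erlang_CDF_def)
  have S1: "?S \<le> 1" using erlang_CDF_nonneg[OF r, of n t] cdf by simp
  have S0: "0 \<le> ?S" using r t by (intro sum_nonneg) simp
  have "1 = (\<integral>\<^sup>+x. ennreal (erlang_density n r x) \<partial>lborel)" using erlang_total[OF r] by simp
  also have "\<dots> = (\<integral>\<^sup>+x. ennreal (erlang_density n r x) * indicator {.. t} x
      + ennreal (erlang_density n r x) * indicator {t<..} x \<partial>lborel)"
    by (intro nn_integral_cong) (auto split: split_indicator)
  also have "\<dots> = ennreal (erlang_CDF n r t)
      + (\<integral>\<^sup>+x. ennreal (erlang_density n r x) * indicator {t<..} x \<partial>lborel)"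
    by (subst nn_integral_add) (auto simp: nn_integral_erlang_density[OF r])
  finally have eq: "ennreal (1 - ?S) + (\<integral>\<^sup>+x. ennreal (erlang_density n r x) * indicator {t<..} x \<partial>lborel)
      = ennreal (1 - ?S) + ennreal ?S"
    using S0 S1 cdf by (simp add: ennreal_plus[symmetric] del: ennreal_plus)
  then show ?thesis by (simp add: ennreal_add_left_cancel)
qed

lemma mix_tail:
  assumes K: "0 \<le> K" and r: "0 < r" and t: "0 \<le> t"
  shows "(\<integral>\<^sup>+x. ennreal (mix K r x) * indicator {t<..} x \<partial>lborel)
       = (\<Sum>n. ennreal (pois K n * (\<Sum>i\<le>n. (r * t) ^ i * exp (- r * t) / fact i)))"
proof -
  have "(\<integral>\<^sup>+x. ennreal (mix K r x) * indicator {t<..} x \<partial>lborel)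
      = (\<integral>\<^sup>+x. (\<Sum>n. ennreal (pois K n) * (ennreal (erlang_density n r x) * indicator {t<..} x)) \<partial>lborel)"
  proof (intro nn_integral_cong)
    fix x
    have "ennreal (mix K r x) = (\<Sum>n. ennreal (pois K n) * ennreal (erlang_density n r x))"
      using K r by (simp add: mix_enn ennreal_mult pois_nonneg)
    then show "ennreal (mix K r x) * indicator {t<..} x
      = (\<Sum>n. ennreal (pois K n) * (ennreal (erlang_density n r x) * indicator {t<..} x))"
      by (simp add: ennreal_suminf_multc[symmetric] mult.assoc del: ennreal_suminf_multc)
  qed
  also have "\<dots> = (\<Sum>n. \<integral>\<^sup>+x. ennreal (pois K n) * (ennreal (erlang_density n r x) * indicator {t<..} x) \<partial>lborel)"
    by (rule nn_integral_suminf) measurable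
  also have "\<dots> = (\<Sum>n. ennreal (pois K n) * ennreal (\<Sum>i\<le>n. (r * t) ^ i * exp (- r * t) / fact i))"
    by (simp add: nn_integral_cmult erlang_tail[OF r t])
  also have "\<dots> = (\<Sum>n. ennreal (pois K n * (\<Sum>i\<le>n. (r * t) ^ i * exp (- r * t) / fact i)))"
    using K by (simp add: ennreal_mult' pois_nonneg)
  finally show ?thesis .
qed

lemma mix_total:
  assumes K: "0 \<le> K" and r: "0 < r"
  shows "(\<integral>\<^sup>+x. ennreal (mix K r x) \<partial>lborel) = 1"
proof -
  have "(\<integral>\<^sup>+x. ennreal (mix K r x) \<partial>lborel)
      = (\<integral>\<^sup>+x. (\<Sum>n. ennreal (pois K n) * ennreal (erlang_density n r x)) \<partial>lborel)"
    using K r by (simp add: mix_enn ennreal_mult pois_nonneg)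
  also have "\<dots> = (\<Sum>n. \<integral>\<^sup>+x. ennreal (pois K n) * ennreal (erlang_density n r x) \<partial>lborel)"
    by (rule nn_integral_suminf) measurable
  also have "\<dots> = (\<Sum>n. ennreal (pois K n))"
    by (simp add: nn_integral_cmult erlang_total[OF r])
  also have "\<dots> = 1"
    using pois_sums[of K] K by (simp add: sums_iff[symmetric] pois_nonneg suminf_ennreal2 sums_summable sums_unique[symmetric])
  finally show ?thesis .
qed

lemma erl_exp_moment:
  assumes r: "0 < r" and s: "0 < s"
  shows "(\<integral>\<^sup>+u. ennreal (erlang_density m r u * ((s * u) ^ i * exp (- s * u) / fact i)) \<partial>lborel)
       = ennreal (real (m + i choose i) * (r / (r + s)) ^ Suc m * (s / (r + s)) ^ i)"
proof -
  let ?c = "(r / (r + s)) ^ Suc m * s ^ i / fact i"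
  have c0: "0 \<le> ?c" using r s by simp
  have pt: "erlang_density m r u * ((s * u) ^ i * exp (- s * u) / fact i)
      = ?c * (erlang_density m (r + s) u * u ^ i)" for u
  proof (cases "u < 0")
    case False
    have e: "exp (- (r + s) * u) = exp (- r * u) * exp (- s * u)" by (simp add: mult_exp_exp algebra_simps)
    have p: "r ^ Suc m = (r / (r + s)) ^ Suc m * (r + s) ^ Suc m"
      using r s by (simp add: power_divide)
    show ?thesis
      unfolding erlang_density_def using False
      apply (simp only: if_False)
      apply (subst p)
      apply (subst e)
      apply (simp add: divide_inverse power_mult_distrib mult_ac)
      done
  qed (simp add: erlang_density_def)
  have "(\<integral>\<^sup>+u. ennreal (erlang_density m r u * ((s * u) ^ i * exp (- s * u) / fact i)) \<partial>lborel)
      = (\<integral>\<^sup>+u. ennreal ?c * ennreal (erlang_density m (r + s) u * u ^ i) \<partial>lborel)"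
    unfolding pt by (rule nn_integral_cong) (rule ennreal_mult'[OF c0])
  also have "\<dots> = ennreal ?c * ennreal (fact (m + i) / (fact m * (r + s) ^ i))"
    using r s by (simp add: nn_integral_cmult nn_integral_erlang_ith_moment)
  also have "\<dots> = ennreal (?c * (fact (m + i) / (fact m * (r + s) ^ i)))"
    by (rule ennreal_mult'[OF c0, symmetric])
  also have "?c * (fact (m + i) / (fact m * (r + s) ^ i))
      = real (m + i choose i) * (r / (r + s)) ^ Suc m * (s / (r + s)) ^ i"
  proof -
    have "real (m + i choose i) = fact (m + i) / (fact i * fact m)"
      by (subst binomial_fact) auto
    then show ?thesis using r s by (simp add: power_divide mult_ac)
  qed
  finally show ?thesis .
qed



lemma ennreal_fin_suminf:
  fixes f :: "nat \<Rightarrow> ennreal"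
  assumes "\<And>k. m < k \<Longrightarrow> f k = 0"
  shows "(\<Sum>k\<le>m. f k) = (\<Sum>k. f k)"
  by (rule suminf_finite[symmetric]) (auto simp: assms not_le)

lemma thinning_enn:
  assumes "0 \<le> K" "0 \<le> r" "r \<le> 1"
  shows "(\<Sum>m. ennreal (pois K m * bin m r k)) = ennreal (pois (K * r) k)"
proof -
  have "(\<lambda>m. ennreal (pois K m * bin m r k)) sums ennreal (pois (K * r) k)"
    using thinning[OF assms, of k] assms
    by (subst sums_ennreal) (auto intro!: mult_nonneg_nonneg pois_nonneg bin_nonneg)
  then show ?thesis by (rule sums_unique[symmetric])
qed

lemma RHS_thin:
  assumes K1: "0 \<le> K1" and K2: "0 \<le> K2" and q0: "0 \<le> q" and q1: "q \<le> 1"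
  shows "(\<Sum>m. \<Sum>n. ennreal (pois K1 m * pois K2 n * RHSfin q m n))
       = (\<Sum>k. \<Sum>j. ennreal (pois (K1 * (1 - q)) k * pois (K2 * q) j * Wt q k j))"
proof -
  define T where "T m n k j = ennreal (pois K1 m * bin m (1 - q) k) * ennreal (pois K2 n * bin n q j) * ennreal (Wt q k j)" for m n k j
  have nn: "0 \<le> pois K1 m * bin m (1 - q) k" "0 \<le> pois K2 n * bin n q j" "0 \<le> Wt q k j" for m n k j
    using K1 K2 q0 q1 by (auto intro!: mult_nonneg_nonneg pois_nonneg bin_nonneg Wt_nonneg)
  have step1: "ennreal (pois K1 m * pois K2 n * RHSfin q m n) = (\<Sum>k. \<Sum>j. T m n k j)" for m n
  proof -
    have "pois K1 m * pois K2 n * RHSfin q m n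
        = (\<Sum>k\<le>m. \<Sum>j\<le>n. (pois K1 m * bin m (1 - q) k) * (pois K2 n * bin n q j) * Wt q k j)"
      unfolding RHSfin_def V_def by (simp add: sum_distrib_left mult_ac)
    then have "ennreal (pois K1 m * pois K2 n * RHSfin q m n) = (\<Sum>k\<le>m. \<Sum>j\<le>n. T m n k j)"
      using nn by (simp add: T_def ennreal_mult[symmetric] sum_nonneg mult_nonneg_nonneg)
    also have "\<dots> = (\<Sum>k. \<Sum>j. T m n k j)"
    proof -
      have "(\<Sum>j\<le>n. T m n k j) = (\<Sum>j. T m n k j)" for k
        by (rule ennreal_fin_suminf) (simp add: T_def bin_gt)
      moreover have "(\<Sum>k\<le>m. \<Sum>j. T m n k j) = (\<Sum>k. \<Sum>j. T m n k j)"
        by (rule ennreal_fin_suminf) (simp add: T_def bin_gt)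
      ultimately show ?thesis by simp
    qed
    finally show ?thesis .
  qed
  have "(\<Sum>m. \<Sum>n. ennreal (pois K1 m * pois K2 n * RHSfin q m n)) = (\<Sum>m. \<Sum>n. \<Sum>k. \<Sum>j. T m n k j)"
    by (simp add: step1)
  also have "\<dots> = (\<Sum>m. \<Sum>k. \<Sum>n. \<Sum>j. T m n k j)"
    by (subst ennreal_suminf_swap) rule
  also have "\<dots> = (\<Sum>k. \<Sum>m. \<Sum>n. \<Sum>j. T m n k j)"
    by (rule ennreal_suminf_swap)
  also have "\<dots> = (\<Sum>k. \<Sum>m. \<Sum>j. \<Sum>n. T m n k j)"
    by (subst ennreal_suminf_swap[of "\<lambda>n j. T _ n _ j"]) rule
  also have "\<dots> = (\<Sum>k. \<Sum>j. \<Sum>m. \<Sum>n. T m n k j)"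
    by (subst ennreal_suminf_swap[of "\<lambda>m j. \<Sum>n. T m n _ j"]) rule
  also have "\<dots> = (\<Sum>k. \<Sum>j. ennreal (pois (K1 * (1 - q)) k) * ennreal (pois (K2 * q) j) * ennreal (Wt q k j))"
  proof -
    have "(\<Sum>m. \<Sum>n. T m n k j) = ennreal (pois (K1 * (1 - q)) k) * ennreal (pois (K2 * q) j) * ennreal (Wt q k j)" for k j
    proof -
      have "(\<Sum>m. \<Sum>n. T m n k j) = (\<Sum>m. ennreal (pois K1 m * bin m (1 - q) k) * ((\<Sum>n. ennreal (pois K2 n * bin n q j)) * ennreal (Wt q k j)))"
        unfolding T_def by (simp add: mult.assoc)
      also have "\<dots> = (\<Sum>m. ennreal (pois K1 m * bin m (1 - q) k)) * ((\<Sum>n. ennreal (pois K2 n * bin n q j)) * ennreal (Wt q k j))"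
        by simp
      also have "\<dots> = ennreal (pois (K1 * (1 - q)) k) * (ennreal (pois (K2 * q) j) * ennreal (Wt q k j))"
        using K1 K2 q0 q1 by (simp add: thinning_enn)
      finally show ?thesis by (simp add: mult.assoc)
    qed
    then show ?thesis by simp
  qed
  also have "\<dots> = (\<Sum>k. \<Sum>j. ennreal (pois (K1 * (1 - q)) k * pois (K2 * q) j * Wt q k j))"
    using K1 K2 q0 q1 by (simp add: ennreal_mult pois_nonneg Wt_nonneg)
  finally show ?thesis .
qed



lemma inner_AE:
  assumes K2: "0 \<le> K2" and r2: "0 < r2" and bm: "0 < bm" and bI: "0 < bI" and gt: "0 < gt" and u: "0 \<le> u"
  shows "(\<integral>\<^sup>+v. ennreal (mix K2 r2 v) * indicator {v. u * bm / (v * bI) < gt} v \<partial>lborel)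
       = (\<Sum>n. ennreal (pois K2 n * (\<Sum>i\<le>n. ((r2 / (gt * bI / bm)) * u) ^ i * exp (- (r2 / (gt * bI / bm)) * u) / fact i)))"
proof -
  let ?c = "gt * bI / bm"
  have c: "0 < ?c" using bm bI gt by simp
  have "(\<integral>\<^sup>+v. ennreal (mix K2 r2 v) * indicator {v. u * bm / (v * bI) < gt} v \<partial>lborel)
      = (\<integral>\<^sup>+v. ennreal (mix K2 r2 v) * indicator {u / ?c<..} v \<partial>lborel)"
  proof (rule nn_integral_cong_AE)
    show "AE v in lborel. ennreal (mix K2 r2 v) * indicator {v. u * bm / (v * bI) < gt} v
        = ennreal (mix K2 r2 v) * indicator {u / ?c<..} v"
      using AE_lborel_singleton[of 0]
    proof eventually_elim
      case (elim v)
      show ?case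
      proof (cases "v < 0")
        case True then show ?thesis by (simp add: mix_neg)
      next
        case False
        with elim have v: "0 < v" by simp
        have "u * bm / (v * bI) < gt \<longleftrightarrow> u * bm < gt * (v * bI)"
          using v bI by (simp add: pos_divide_less_eq)
        also have "\<dots> \<longleftrightarrow> u / ?c < v"
          using bm bI gt by (simp add: pos_divide_less_eq mult_ac)
        finally show ?thesis by (simp add: indicator_def)
      qed
    qed
  qed
  also have "\<dots> = (\<Sum>n. ennreal (pois K2 n * (\<Sum>i\<le>n. (r2 * (u / ?c)) ^ i * exp (- r2 * (u / ?c)) / fact i)))"
    by (rule mix_tail[OF K2 r2 divide_nonneg_pos[OF u c]])
  also have "\<dots> = (\<Sum>n. ennreal (pois K2 n * (\<Sum>i\<le>n. ((r2 / ?c) * u) ^ i * exp (- (r2 / ?c) * u) / fact i)))"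
    by (simp add: field_simps)
  finally show ?thesis .
qed

lemma double_mix:
  assumes K1: "0 \<le> K1" and K2: "0 \<le> K2" and r1: "0 < r1" and r2: "0 < r2"
    and bm: "0 < bm" and bI: "0 < bI" and gt: "0 < gt"
  defines "q \<equiv> r1 / (r1 + r2 / (gt * bI / bm))"
  shows "(\<integral>\<^sup>+u. ennreal (mix K1 r1 u) *
            (\<integral>\<^sup>+v. ennreal (mix K2 r2 v) * indicator {v. u * bm / (v * bI) < gt} v \<partial>lborel) \<partial>lborel)
       = (\<Sum>k. \<Sum>j. ennreal (pois (K1 * (1 - q)) k * pois (K2 * q) j * Wt q k j))"
proof -
  define s where "s = r2 / (gt * bI / bm)"
  have s: "0 < s" using r2 bm bI gt by (simp add: s_def)
  have qs: "q = r1 / (r1 + s)" unfolding q_def s_def ..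
  have q0: "0 \<le> q" "q \<le> 1" using r1 s by (simp_all add: qs)
  have q1: "s / (r1 + s) = 1 - q" using r1 s by (simp add: qs field_simps)
  have q2: "r1 / (r1 + s) = q" by (simp add: qs)
  define F where "F m n i u = ennreal (pois K1 m * pois K2 n * (erlang_density m r1 u * ((s * u) ^ i * exp (- s * u) / fact i)))" for m n i u
  have pt: "ennreal (mix K1 r1 u) *
            (\<integral>\<^sup>+v. ennreal (mix K2 r2 v) * indicator {v. u * bm / (v * bI) < gt} v \<partial>lborel)
        = (\<Sum>m. \<Sum>n. \<Sum>i\<le>n. F m n i u)" for u
  proof (cases "u < 0")
    case True
    then show ?thesis by (simp add: mix_neg F_def erl_neg)
  next
    case False
    then have u: "0 \<le> u" by simp
    have "ennreal (mix K1 r1 u) *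
            (\<integral>\<^sup>+v. ennreal (mix K2 r2 v) * indicator {v. u * bm / (v * bI) < gt} v \<partial>lborel)
        = (\<Sum>m. ennreal (pois K1 m * erlang_density m r1 u)) *
          (\<Sum>n. ennreal (pois K2 n * (\<Sum>i\<le>n. (s * u) ^ i * exp (- s * u) / fact i)))"
      using inner_AE[OF K2 r2 bm bI gt u] mix_enn[OF K1, of r1 u] r1 by (simp add: s_def)
    also have "\<dots> = (\<Sum>m. \<Sum>n. ennreal (pois K1 m * erlang_density m r1 u) *
          ennreal (pois K2 n * (\<Sum>i\<le>n. (s * u) ^ i * exp (- s * u) / fact i)))"
      by simp
    also have "\<dots> = (\<Sum>m. \<Sum>n. \<Sum>i\<le>n. F m n i u)"
    proof -
      have "ennreal (pois K1 m * erlang_density m r1 u) *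
          ennreal (pois K2 n * (\<Sum>i\<le>n. (s * u) ^ i * exp (- s * u) / fact i)) = (\<Sum>i\<le>n. F m n i u)" for m n
      proof -
        have nn: "0 \<le> pois K1 m * erlang_density m r1 u"
          using K1 r1 by (intro mult_nonneg_nonneg pois_nonneg) auto
        have "ennreal (pois K1 m * erlang_density m r1 u) *
          ennreal (pois K2 n * (\<Sum>i\<le>n. (s * u) ^ i * exp (- s * u) / fact i))
          = ennreal ((pois K1 m * erlang_density m r1 u) * (pois K2 n * (\<Sum>i\<le>n. (s * u) ^ i * exp (- s * u) / fact i)))"
          by (rule ennreal_mult'[OF nn, symmetric])
        also have "(pois K1 m * erlang_density m r1 u) * (pois K2 n * (\<Sum>i\<le>n. (s * u) ^ i * exp (- s * u) / fact i))
          = (\<Sum>i\<le>n. pois K1 m * pois K2 n * (erlang_density m r1 u * ((s * u) ^ i * exp (- s * u) / fact i)))"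
          by (simp add: sum_distrib_left mult_ac)
        also have "ennreal \<dots> = (\<Sum>i\<le>n. F m n i u)"
          unfolding F_def using K1 K2 r1 s u
          by (intro sum_ennreal[symmetric]) (auto intro!: mult_nonneg_nonneg divide_nonneg_nonneg pois_nonneg simp del: times_divide_eq_right times_divide_eq_left)
        finally show ?thesis .
      qed
      then show ?thesis by simp
    qed
    finally show ?thesis .
  qed
  have Fm[measurable]: "F m n i \<in> borel_measurable lborel" for m n i
    unfolding F_def by measurable
  have "(\<integral>\<^sup>+u. ennreal (mix K1 r1 u) *
            (\<integral>\<^sup>+v. ennreal (mix K2 r2 v) * indicator {v. u * bm / (v * bI) < gt} v \<partial>lborel) \<partial>lborel)
      = (\<integral>\<^sup>+u. (\<Sum>m. \<Sum>n. \<Sum>i\<le>n. F m n i u) \<partial>lborel)"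
    by (simp add: pt)
  also have "\<dots> = (\<Sum>m. \<integral>\<^sup>+u. (\<Sum>n. \<Sum>i\<le>n. F m n i u) \<partial>lborel)"
    by (rule nn_integral_suminf) measurable
  also have "\<dots> = (\<Sum>m. \<Sum>n. \<Sum>i\<le>n. \<integral>\<^sup>+u. F m n i u \<partial>lborel)"
  proof -
    have "(\<integral>\<^sup>+u. (\<Sum>n. \<Sum>i\<le>n. F m n i u) \<partial>lborel) = (\<Sum>n. \<Sum>i\<le>n. \<integral>\<^sup>+u. F m n i u \<partial>lborel)" for m
      by (subst nn_integral_suminf) (measurable, simp add: nn_integral_sum)
    then show ?thesis by simp
  qed
  also have "\<dots> = (\<Sum>m. \<Sum>n. ennreal (pois K1 m * pois K2 n * LHSfin q m n))"
  proof -
    have "(\<integral>\<^sup>+u. F m n i u \<partial>lborel) = ennreal (pois K1 m * pois K2 n * (real (m + i choose i) * q ^ Suc m * (1 - q) ^ i))" for m n i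
    proof -
      have nn: "0 \<le> pois K1 m * pois K2 n" using K1 K2 by (simp add: pois_nonneg)
      have "(\<integral>\<^sup>+u. F m n i u \<partial>lborel) = (\<integral>\<^sup>+u. ennreal (pois K1 m * pois K2 n) * ennreal (erlang_density m r1 u * ((s * u) ^ i * exp (- s * u) / fact i)) \<partial>lborel)"
        unfolding F_def by (rule nn_integral_cong) (subst ennreal_mult'[OF nn, symmetric], simp only: mult.assoc)
      also have "\<dots> = ennreal (pois K1 m * pois K2 n) * ennreal (real (m + i choose i) * (r1 / (r1 + s)) ^ Suc m * (s / (r1 + s)) ^ i)"
        using erl_exp_moment[OF r1 s, of m i] by (simp add: nn_integral_cmult)
      also have "\<dots> = ennreal (pois K1 m * pois K2 n * (real (m + i choose i) * q ^ Suc m * (1 - q) ^ i))"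
        unfolding q1 q2 by (rule ennreal_mult'[OF nn, symmetric])
      finally show ?thesis .
    qed
    moreover have "(\<Sum>i\<le>n. ennreal (pois K1 m * pois K2 n * (real (m + i choose i) * q ^ Suc m * (1 - q) ^ i)))
        = ennreal (pois K1 m * pois K2 n * LHSfin q m n)" for m n
      unfolding LHSfin_def sum_distrib_left using K1 K2 q0
      by (intro sum_ennreal) (auto intro!: mult_nonneg_nonneg pois_nonneg)
    ultimately show ?thesis by simp
  qed
  also have "\<dots> = (\<Sum>m. \<Sum>n. ennreal (pois K1 m * pois K2 n * RHSfin q m n))"
    by (simp add: fin_identity)
  also have "\<dots> = (\<Sum>k. \<Sum>j. ennreal (pois (K1 * (1 - q)) k * pois (K2 * q) j * Wt q k j))"
    by (rule RHS_thin[OF K1 K2 q0])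
  finally show ?thesis .
qed



lemma nn_integral_bool_lborel:
  assumes f[measurable]: "f \<in> borel_measurable (count_space UNIV \<Otimes>\<^sub>M (lborel :: real measure))"
  shows "(\<integral>\<^sup>+z. f z \<partial>(count_space UNIV \<Otimes>\<^sub>M lborel)) = (\<integral>\<^sup>+h. f (True, h) \<partial>lborel) + (\<integral>\<^sup>+h. f (False, h) \<partial>lborel)"
proof -
  have "(\<integral>\<^sup>+z. f z \<partial>(count_space UNIV \<Otimes>\<^sub>M lborel)) = (\<integral>\<^sup>+e. \<integral>\<^sup>+h. f (e, h) \<partial>lborel \<partial>count_space UNIV)"
    by (rule lborel.nn_integral_fst[symmetric]) simp
  also have "\<dots> = (\<Sum>e\<in>UNIV. \<integral>\<^sup>+h. f (e, h) \<partial>lborel)"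
    by (rule nn_integral_count_space_finite) simp
  also have "\<dots> = (\<integral>\<^sup>+h. f (True, h) \<partial>lborel) + (\<integral>\<^sup>+h. f (False, h) \<partial>lborel)"
    by (simp add: UNIV_bool)
  finally show ?thesis .
qed

lemma law_enn:
  fixes f :: "real \<Rightarrow> real"
  assumes f[measurable]: "f \<in> borel_measurable borel" and f0: "\<And>h. 0 \<le> f h"
    and tot: "(\<integral>\<^sup>+h. ennreal (f h) \<partial>lborel) = 1"
    and A[measurable]: "A \<in> sets borel" and p: "0 \<le> p"
  shows "ennreal (p * (LINT h:A|lborel. f h)) = (\<integral>\<^sup>+h. ennreal (p * f h) * indicator A h \<partial>lborel)"
proof -
  have "(LINT h:A|lborel. f h) = enn2real (\<integral>\<^sup>+h. ennreal (indicator A h *\<^sub>R f h) \<partial>lborel)"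
    unfolding set_lebesgue_integral_def using A f0 by (intro integral_eq_nn_integral) auto
  also have "(\<integral>\<^sup>+h. ennreal (indicator A h *\<^sub>R f h) \<partial>lborel) = (\<integral>\<^sup>+h. ennreal (f h) * indicator A h \<partial>lborel)"
    by (intro nn_integral_cong) (simp split: split_indicator)
  finally have I: "(LINT h:A|lborel. f h) = enn2real (\<integral>\<^sup>+h. ennreal (f h) * indicator A h \<partial>lborel)" .
  have fin: "(\<integral>\<^sup>+h. ennreal (f h) * indicator A h \<partial>lborel) \<noteq> \<infinity>"
  proof -
    have "(\<integral>\<^sup>+h. ennreal (f h) * indicator A h \<partial>lborel) \<le> (\<integral>\<^sup>+h. ennreal (f h) \<partial>lborel)"
      by (intro nn_integral_mono) (simp split: split_indicator)
    then show ?thesis using tot by (auto simp: top_unique)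
  qed
  have "ennreal (p * (LINT h:A|lborel. f h)) = ennreal p * (\<integral>\<^sup>+h. ennreal (f h) * indicator A h \<partial>lborel)"
    unfolding I using p fin by (simp add: ennreal_mult ennreal_enn2real_if)
  also have "\<dots> = (\<integral>\<^sup>+h. ennreal (p * f h) * indicator A h \<partial>lborel)"
  proof -
    have "(\<integral>\<^sup>+h. ennreal (p * f h) * indicator A h \<partial>lborel) = (\<integral>\<^sup>+h. ennreal p * (ennreal (f h) * indicator A h) \<partial>lborel)"
      by (intro nn_integral_cong) (simp add: ennreal_mult'[OF p] mult.assoc)
    also have "\<dots> = ennreal p * (\<integral>\<^sup>+h. ennreal (f h) * indicator A h \<partial>lborel)"
      by (rule nn_integral_cmult) measurable
    finally show ?thesis by simp
  qed
  finally show ?thesis .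
qed

lemma density_D:
  fixes h :: "'a \<Rightarrow> real" and f1 f0 :: "real \<Rightarrow> real"
  assumes M: "prob_space M"
    and E[measurable]: "E \<in> measurable M (count_space UNIV)" and h[measurable]: "h \<in> borel_measurable M"
    and f1[measurable]: "f1 \<in> borel_measurable borel" and f10: "\<And>x. 0 \<le> f1 x" and tot1: "(\<integral>\<^sup>+x. ennreal (f1 x) \<partial>lborel) = 1"
    and f0[measurable]: "f0 \<in> borel_measurable borel" and f00: "\<And>x. 0 \<le> f0 x" and tot0: "(\<integral>\<^sup>+x. ennreal (f0 x) \<partial>lborel) = 1"
    and p: "0 \<le> p" "p \<le> 1"
    and lawL: "\<And>A. A \<in> sets borel \<Longrightarrow> measure M {x \<in> space M. E x \<and> h x \<in> A} = p * (LINT t:A|lborel. f1 t)"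
    and lawN: "\<And>A. A \<in> sets borel \<Longrightarrow> measure M {x \<in> space M. \<not> E x \<and> h x \<in> A} = (1 - p) * (LINT t:A|lborel. f0 t)"
  shows "distr M (count_space UNIV \<Otimes>\<^sub>M borel) (\<lambda>x. (E x, h x))
       = density (count_space UNIV \<Otimes>\<^sub>M lborel) (\<lambda>z. ennreal (if fst z then p * f1 (snd z) else (1 - p) * f0 (snd z)))"
    (is "?L = density ?N ?g")
proof (rule measure_eqI)
  interpret prob_space M by (rule M)
  have sN: "sets ?N = sets (count_space UNIV \<Otimes>\<^sub>M borel)"
    by (intro sets_pair_measure_cong) auto
  show "sets ?L = sets (density ?N ?g)" using sN by simp
  fix A assume "A \<in> sets ?L"
  then have A[measurable]: "A \<in> sets (count_space UNIV \<Otimes>\<^sub>M borel)" by simp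
  have AT[measurable]: "Pair True -` A \<in> sets borel" and AF[measurable]: "Pair False -` A \<in> sets borel"
    using A by (auto intro!: measurable_sets[OF measurable_Pair2'])
  have "emeasure ?L A = emeasure M ((\<lambda>x. (E x, h x)) -` A \<inter> space M)"
    by (rule emeasure_distr) (auto simp: A)
  also have "(\<lambda>x. (E x, h x)) -` A \<inter> space M
     = {x \<in> space M. E x \<and> h x \<in> Pair True -` A} \<union> {x \<in> space M. \<not> E x \<and> h x \<in> Pair False -` A}"
    apply (rule set_eqI) subgoal for x by (cases "E x") auto done
  also have "emeasure M \<dots> = emeasure M {x \<in> space M. E x \<and> h x \<in> Pair True -` A}
      + emeasure M {x \<in> space M. \<not> E x \<and> h x \<in> Pair False -` A}"
    by (rule plus_emeasure[symmetric]) auto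
  also have "\<dots> = ennreal (p * (LINT t:Pair True -` A|lborel. f1 t)) + ennreal ((1 - p) * (LINT t:Pair False -` A|lborel. f0 t))"
    by (simp only: emeasure_eq_measure lawL[OF AT] lawN[OF AF])
  also have "\<dots> = (\<integral>\<^sup>+t. ennreal (p * f1 t) * indicator (Pair True -` A) t \<partial>lborel)
      + (\<integral>\<^sup>+t. ennreal ((1 - p) * f0 t) * indicator (Pair False -` A) t \<partial>lborel)"
    using p by (simp add: law_enn f10 f00 tot1 tot0)
  also have "\<dots> = (\<integral>\<^sup>+t. ?g (True, t) * indicator A (True, t) \<partial>lborel)
      + (\<integral>\<^sup>+t. ?g (False, t) * indicator A (False, t) \<partial>lborel)"
    by (simp add: indicator_def)
  also have "\<dots> = (\<integral>\<^sup>+z. ?g z * indicator A z \<partial>?N)"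
  proof -
    have "(\<lambda>z. ?g z * indicator A z) \<in> borel_measurable ?N"
      unfolding measurable_cong_sets[OF sN refl] by measurable
    from nn_integral_bool_lborel[OF this] show ?thesis by simp
  qed
  also have "\<dots> = emeasure (density ?N ?g) A"
    using A sN by (subst emeasure_density) auto
  finally show "emeasure ?L A = emeasure (density ?N ?g) A" .
qed



lemma joint_block:
  fixes M :: "'a measure" and Em EI :: "'a \<Rightarrow> bool" and hm hI :: "'a \<Rightarrow> real"
    and f1 f0 g1 g0 :: "real \<Rightarrow> real" and P :: "bool \<Rightarrow> bool \<Rightarrow> bool"
  assumes M: "prob_space M"
    and Em[measurable]: "Em \<in> measurable M (count_space UNIV)" and EI[measurable]: "EI \<in> measurable M (count_space UNIV)"
    and hm[measurable]: "hm \<in> borel_measurable M" and hI[measurable]: "hI \<in> borel_measurable M"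
    and indep: "prob_space.indep_var M
                  (count_space UNIV \<Otimes>\<^sub>M borel) (\<lambda>x. (Em x, hm x))
                  (count_space UNIV \<Otimes>\<^sub>M borel) (\<lambda>x. (EI x, hI x))"
    and f1[measurable]: "f1 \<in> borel_measurable borel" and f0[measurable]: "f0 \<in> borel_measurable borel"
    and g1[measurable]: "g1 \<in> borel_measurable borel" and g0[measurable]: "g0 \<in> borel_measurable borel"
    and D1: "distr M (count_space UNIV \<Otimes>\<^sub>M borel) (\<lambda>x. (Em x, hm x))
       = density (count_space UNIV \<Otimes>\<^sub>M lborel) (\<lambda>z. ennreal (if fst z then f1 (snd z) else f0 (snd z)))"
    and D2: "distr M (count_space UNIV \<Otimes>\<^sub>M borel) (\<lambda>x. (EI x, hI x))
       = density (count_space UNIV \<Otimes>\<^sub>M lborel) (\<lambda>z. ennreal (if fst z then g1 (snd z) else g0 (snd z)))"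
  shows "emeasure M {x \<in> space M. P (Em x) (EI x) \<and> hm x * bm / (hI x * bI) < gt}
     = (\<Sum>a\<in>UNIV. \<Sum>b\<in>UNIV. if P a b then
          (\<integral>\<^sup>+u. ennreal (if a then f1 u else f0 u) *
             (\<integral>\<^sup>+v. ennreal (if b then g1 v else g0 v) * indicator {v. u * bm / (v * bI) < gt} v \<partial>lborel) \<partial>lborel)
        else 0)"
proof -
  interpret prob_space M by (rule M)
  let ?S = "count_space (UNIV :: bool set) \<Otimes>\<^sub>M (borel :: real measure)"
  let ?N = "count_space (UNIV :: bool set) \<Otimes>\<^sub>M (lborel :: real measure)"
  have sN: "sets ?N = sets ?S" by (intro sets_pair_measure_cong) auto
  let ?D1 = "distr M ?S (\<lambda>x. (Em x, hm x))"
  let ?D2 = "distr M ?S (\<lambda>x. (EI x, hI x))"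
  let ?G1 = "\<lambda>z. ennreal (if fst z then f1 (snd z) else f0 (snd z))"
  let ?G2 = "\<lambda>z. ennreal (if fst z then g1 (snd z) else g0 (snd z))"
  define B where "B = {z \<in> space (?S \<Otimes>\<^sub>M ?S). P (fst (fst z)) (fst (snd z)) \<and> snd (fst z) * bm / (snd (snd z) * bI) < gt}"
  have B[measurable]: "B \<in> sets (?S \<Otimes>\<^sub>M ?S)"
    unfolding B_def by measurable
  interpret D2: prob_space ?D2 by (rule prob_space_distr) measurable
  have "emeasure M {x \<in> space M. P (Em x) (EI x) \<and> hm x * bm / (hI x * bI) < gt}
      = emeasure M ((\<lambda>x. ((Em x, hm x), (EI x, hI x))) -` B \<inter> space M)"
    by (intro arg_cong[where f="emeasure M"]) (auto simp: B_def space_pair_measure)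
  also have "\<dots> = emeasure (distr M (?S \<Otimes>\<^sub>M ?S) (\<lambda>x. ((Em x, hm x), (EI x, hI x)))) B"
    by (rule emeasure_distr[symmetric]) measurable
  also have "distr M (?S \<Otimes>\<^sub>M ?S) (\<lambda>x. ((Em x, hm x), (EI x, hI x))) = ?D1 \<Otimes>\<^sub>M ?D2"
    using indep_var_distribution_eq[THEN iffD1, OF indep] by simp
  also have "emeasure (?D1 \<Otimes>\<^sub>M ?D2) B = (\<integral>\<^sup>+x. emeasure ?D2 (Pair x -` B) \<partial>?D1)"
    by (rule D2.emeasure_pair_measure_alt) (simp add: B)
  also have "\<dots> = (\<integral>\<^sup>+x. ?G1 x * emeasure ?D2 (Pair x -` B) \<partial>?N)"
  proof -
    have m: "(\<lambda>x. emeasure ?D2 (Pair x -` B)) \<in> borel_measurable ?N"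
    proof -
      have "sets (?S \<Otimes>\<^sub>M ?D2) = sets (?S \<Otimes>\<^sub>M ?S)" by (rule sets_pair_measure_cong) simp_all
      then have "B \<in> sets (?S \<Otimes>\<^sub>M ?D2)" using B by simp
      from D2.measurable_emeasure_Pair[OF this] show ?thesis
        by (simp only: measurable_cong_sets[OF sN refl])
    qed
    show ?thesis unfolding D1
      apply (rule nn_integral_density)
      subgoal unfolding measurable_cong_sets[OF sN refl] by measurable
      subgoal by (rule m)
      done
  qed
  also have "\<dots> = (\<integral>\<^sup>+x. ?G1 x * (\<Sum>b\<in>UNIV. if P (fst x) b then
          (\<integral>\<^sup>+v. ennreal (if b then g1 v else g0 v) * indicator {v. snd x * bm / (v * bI) < gt} v \<partial>lborel) else 0) \<partial>?N)"
  proof (intro nn_integral_cong arg_cong2[where f="(*)"] refl)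
    fix x :: "bool \<times> real"
    have C: "Pair x -` B \<in> sets ?N"
      using sN measurable_Pair2[of "\<lambda>z. z" "?S \<Otimes>\<^sub>M ?S" ?S, OF measurable_ident_sets] B
      by (auto intro!: sets_Pair1)
    have "emeasure ?D2 (Pair x -` B) = emeasure (density ?N ?G2) (Pair x -` B)"
      unfolding D2 ..
    also have "\<dots> = (\<integral>\<^sup>+y. ?G2 y * indicator (Pair x -` B) y \<partial>?N)"
      apply (rule emeasure_density)
      subgoal unfolding measurable_cong_sets[OF sN refl] by measurable
      subgoal by (rule C)
      done
    also have "\<dots> = (\<integral>\<^sup>+v. ?G2 (True, v) * indicator (Pair x -` B) (True, v) \<partial>lborel)
       + (\<integral>\<^sup>+v. ?G2 (False, v) * indicator (Pair x -` B) (False, v) \<partial>lborel)"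
    proof -
      have "(\<lambda>y. ?G2 y * indicator (Pair x -` B) y) \<in> borel_measurable ?N"
        unfolding measurable_cong_sets[OF sN refl] using C sN by measurable
      from nn_integral_bool_lborel[OF this] show ?thesis by simp
    qed
    also have "\<dots> = (\<Sum>b\<in>UNIV. if P (fst x) b then
          (\<integral>\<^sup>+v. ennreal (if b then g1 v else g0 v) * indicator {v. snd x * bm / (v * bI) < gt} v \<partial>lborel) else 0)"
      by (cases x) (simp add: UNIV_bool B_def space_pair_measure indicator_def)
    finally show "emeasure ?D2 (Pair x -` B) = \<dots>" .
  qed
  also have "\<dots> = (\<Sum>a\<in>UNIV. \<Sum>b\<in>UNIV. if P a b then
          (\<integral>\<^sup>+u. ennreal (if a then f1 u else f0 u) *
             (\<integral>\<^sup>+v. ennreal (if b then g1 v else g0 v) * indicator {v. u * bm / (v * bI) < gt} v \<partial>lborel) \<partial>lborel)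
        else 0)"
  proof -
    let ?H = "\<lambda>x. ?G1 x * (\<Sum>b\<in>UNIV. if P (fst x) b then
          (\<integral>\<^sup>+v. ennreal (if b then g1 v else g0 v) * indicator {v. snd x * bm / (v * bI) < gt} v \<partial>lborel) else 0)"
    have "?H \<in> borel_measurable ?N"
      unfolding measurable_cong_sets[OF sN refl] by measurable
    note Hm = this
    have Ha: "(\<integral>\<^sup>+h. ?H (a, h) \<partial>lborel) = (\<Sum>b\<in>UNIV. if P a b then
          (\<integral>\<^sup>+u. ennreal (if a then f1 u else f0 u) *
             (\<integral>\<^sup>+v. ennreal (if b then g1 v else g0 v) * indicator {v. u * bm / (v * bI) < gt} v \<partial>lborel) \<partial>lborel)
        else 0)" for a
    proof -
      let ?I = "\<lambda>b u. (\<integral>\<^sup>+v. ennreal (if b then g1 v else g0 v) * indicator {v. u * bm / (v * bI) < gt} v \<partial>lborel)"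
      have "(\<integral>\<^sup>+h. ?H (a, h) \<partial>lborel) = (\<integral>\<^sup>+h. (\<Sum>b\<in>UNIV. if P a b then ennreal (if a then f1 h else f0 h) * ?I b h else 0) \<partial>lborel)"
        by (intro nn_integral_cong) (auto simp: sum_distrib_left intro!: sum.cong)
      also have "\<dots> = (\<Sum>b\<in>UNIV. \<integral>\<^sup>+h. (if P a b then ennreal (if a then f1 h else f0 h) * ?I b h else 0) \<partial>lborel)"
        by (rule nn_integral_sum) measurable
      also have "\<dots> = (\<Sum>b\<in>UNIV. if P a b then (\<integral>\<^sup>+h. ennreal (if a then f1 h else f0 h) * ?I b h \<partial>lborel) else 0)"
        by (intro sum.cong refl) auto
      finally show ?thesis .
    qed
    from nn_integral_bool_lborel[OF Hm] show ?thesis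
      using Ha[of True] Ha[of False] by (simp add: UNIV_bool add.commute)
  qed
  finally show ?thesis .
qed



lemma pois_summable: "summable (pois K)"
  using pois_sums sums_summable by blast

lemma pois_partial_le: "0 \<le> K \<Longrightarrow> (\<Sum>j\<le>k. pois K j) \<le> 1"
proof -
  assume K: "0 \<le> K"
  have "sum (pois K) {..k} \<le> suminf (pois K)"
    by (rule sum_le_suminf) (auto simp: pois_summable pois_nonneg[OF K])
  then show ?thesis using pois_sums[of K] by (simp add: sums_iff)
qed

lemma pois_DERIV_y:
  "DERIV (\<lambda>y. pois y i) y :> (if i = 0 then 0 else pois y (i - 1)) - pois y i"
proof (cases i)
  case 0
  show ?thesis unfolding 0 pois_def
    by (auto intro!: derivative_eq_intros)
next
  case (Suc j)
  have e: "DERIV (\<lambda>y. exp (- y)) y :> - exp (- y)"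
    by (auto intro!: derivative_eq_intros)
  have p: "DERIV (\<lambda>y. y ^ Suc j) y :> real (Suc j) * y ^ j"
    using DERIV_pow[of "Suc j" y] by simp
  have d: "DERIV (\<lambda>y. exp (- y) * y ^ Suc j / fact (Suc j)) y :>
      (- exp (- y) * y ^ Suc j + real (Suc j) * y ^ j * exp (- y)) / fact (Suc j)"
    by (rule DERIV_cdivide[OF DERIV_mult[OF e p]])
  have eq: "(- exp (- y) * y ^ Suc j + real (Suc j) * y ^ j * exp (- y)) / fact (Suc j) = exp (- y) * y ^ j / fact j - exp (- y) * y ^ Suc j / fact (Suc j)"
  proof -
    have "real (Suc j) * y ^ j * exp (- y) / fact (Suc j) = exp (- y) * y ^ j / fact j"
      by (simp add: fact_Suc del: of_nat_Suc)
    then show ?thesis by (simp add: diff_divide_distrib add_divide_distrib)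
  qed
  show ?thesis using d unfolding eq Suc pois_def by simp
qed

lemma pois_DERIV:
  "DERIV (\<lambda>x. pois (x\<^sup>2 / 2) i) x :> x * ((if i = 0 then 0 else pois (x\<^sup>2 / 2) (i - 1)) - pois (x\<^sup>2 / 2) i)"
proof -
  have d: "DERIV (\<lambda>x::real. x\<^sup>2 / 2) x :> x"
    by (auto intro!: derivative_eq_intros)
  from DERIV_chain2[OF pois_DERIV_y d] show ?thesis by (simp add: mult.commute)
qed

lemma pois_sum_DERIV:
  "DERIV (\<lambda>x. - (\<Sum>i\<le>k. pois (x\<^sup>2 / 2) i)) x :> x * pois (x\<^sup>2 / 2) k"
proof (induction k)
  case 0
  show ?case using DERIV_minus[OF pois_DERIV[of 0 x]] by simp
next
  case (Suc k)
  have "DERIV (\<lambda>x. - (\<Sum>i\<le>k. pois (x\<^sup>2 / 2) i) - pois (x\<^sup>2 / 2) (Suc k)) x :>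
      x * pois (x\<^sup>2 / 2) k - x * (pois (x\<^sup>2 / 2) k - pois (x\<^sup>2 / 2) (Suc k))"
    using DERIV_diff[OF Suc pois_DERIV[of "Suc k" x]] by simp
  moreover have "(\<lambda>x. - (\<Sum>i\<le>Suc k. pois (x\<^sup>2 / 2) i)) = (\<lambda>x. - (\<Sum>i\<le>k. pois (x\<^sup>2 / 2) i) - pois (x\<^sup>2 / 2) (Suc k))"
    by (simp add: fun_eq_iff)
  moreover have "x * pois (x\<^sup>2 / 2) k - x * (pois (x\<^sup>2 / 2) k - pois (x\<^sup>2 / 2) (Suc k)) = x * pois (x\<^sup>2 / 2) (Suc k)"
    by (simp add: algebra_simps)
  ultimately show ?case by simp
qed

lemma pois_alt: "pois y i = y ^ i / exp y / fact i"
  by (simp add: pois_def exp_minus divide_inverse)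
lemma pois_tendsto: "((\<lambda>x::real. pois (x\<^sup>2 / 2) i) \<longlongrightarrow> 0) at_top"
proof -
  have lim: "filterlim (\<lambda>x::real. x\<^sup>2 / 2) at_top at_top"
    by real_asymp
  have "((\<lambda>y::real. y ^ i / exp y / fact i) \<longlongrightarrow> 0 / fact i) at_top"
    by (intro tendsto_divide tendsto_power_div_exp_0 tendsto_const) simp
  from filterlim_compose[OF this lim] show ?thesis
    by (simp add: pois_alt)
qed

lemma marcum_term:
  assumes b: "0 \<le> b"
  shows "(\<integral>\<^sup>+x. ennreal (x * pois (x\<^sup>2 / 2) k) * indicator {b..} x \<partial>lborel)
       = ennreal (\<Sum>i\<le>k. pois (b\<^sup>2 / 2) i)"
proof -
  have "(\<integral>\<^sup>+x. ennreal (x * pois (x\<^sup>2 / 2) k) * indicator {b..} x \<partial>lborel)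
      = ennreal (0 - (- (\<Sum>i\<le>k. pois (b\<^sup>2 / 2) i)))"
  proof (rule nn_integral_FTC_atLeast)
    show "(\<lambda>x. x * pois (x\<^sup>2 / 2) k) \<in> borel_measurable borel"
      unfolding pois_def by measurable
    show "DERIV (\<lambda>x. - (\<Sum>i\<le>k. pois (x\<^sup>2 / 2) i)) x :> x * pois (x\<^sup>2 / 2) k" for x
      by (rule pois_sum_DERIV)
    show "0 \<le> x * pois (x\<^sup>2 / 2) k" if "b \<le> x" for x
      using that b by (intro mult_nonneg_nonneg pois_nonneg) auto
    show "((\<lambda>x. - (\<Sum>i\<le>k. pois (x\<^sup>2 / 2) i)) \<longlongrightarrow> 0) at_top"
      using tendsto_minus[OF tendsto_sum[of "{..k}" "\<lambda>i x. pois (x\<^sup>2 / 2) i" "\<lambda>i. 0" at_top, OF pois_tendsto]] by simp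
  qed
  then show ?thesis by simp
qed

lemma besselI0_nonneg: "0 \<le> besselI0 x"
  unfolding besselI0_def by (intro suminf_nonneg summable_bessel) simp

lemma marcum_series:
  assumes a: "0 \<le> a" and b: "0 \<le> b"
  shows "(\<lambda>k. pois (a\<^sup>2 / 2) k * (\<Sum>i\<le>k. pois (b\<^sup>2 / 2) i)) sums marcumQ a b"
proof -
  let ?f = "\<lambda>x. x * exp (- (x\<^sup>2 + a\<^sup>2) / 2) * besselI0 (a * x)"
  let ?t = "\<lambda>k x. pois (a\<^sup>2 / 2) k * (x * pois (x\<^sup>2 / 2) k)"
  let ?S = "\<lambda>k. pois (a\<^sup>2 / 2) k * (\<Sum>i\<le>k. pois (b\<^sup>2 / 2) i)"
  have summ: "summable ?S"
  proof (rule summable_comparison_test[OF _ pois_summable])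
    show "\<exists>N. \<forall>n\<ge>N. norm (?S n) \<le> pois (a\<^sup>2 / 2) n"
      using pois_partial_le[of "b\<^sup>2/2"]
      by (auto simp: pois_nonneg sum_nonneg abs_mult intro!: mult_left_le)
  qed
  have four: "(4::real) ^ k = 2 ^ k * 2 ^ k" for k :: nat by (simp add: power_mult_distrib[symmetric])
  have term_eq: "?t k x = (exp (- (x\<^sup>2 + a\<^sup>2) / 2) * x) * (((a * x)\<^sup>2 / 4) ^ k / (fact k)\<^sup>2)" for k x
    by (simp add: pois_def power2_eq_square power_mult_distrib field_simps mult_exp_exp four)
  have ser: "?f x = (\<Sum>k. ?t k x)" for x
  proof -
    have "(\<Sum>k. ?t k x) = (\<Sum>k. (exp (- (x\<^sup>2 + a\<^sup>2) / 2) * x) * (((a * x)\<^sup>2 / 4) ^ k / (fact k)\<^sup>2))"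
      unfolding term_eq ..
    also have "\<dots> = (exp (- (x\<^sup>2 + a\<^sup>2) / 2) * x) * besselI0 (a * x)"
      unfolding besselI0_def by (rule suminf_mult[OF summable_bessel])
    finally show ?thesis by simp
  qed
  have tsumm: "summable (\<lambda>k. ?t k x)" for x
    unfolding term_eq by (intro summable_mult summable_bessel)
  have "marcumQ a b = enn2real (\<integral>\<^sup>+x. ennreal (indicator {b..} x *\<^sub>R ?f x) \<partial>lborel)"
    unfolding marcumQ_def set_lebesgue_integral_def using b
    by (intro integral_eq_nn_integral) (auto simp: besselI0_nonneg indicator_def)
  also have "(\<integral>\<^sup>+x. ennreal (indicator {b..} x *\<^sub>R ?f x) \<partial>lborel)
      = (\<integral>\<^sup>+x. (\<Sum>k. ennreal (pois (a\<^sup>2 / 2) k) * (ennreal (x * pois (x\<^sup>2 / 2) k) * indicator {b..} x)) \<partial>lborel)"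
  proof (rule nn_integral_cong)
    fix x :: real
    show "ennreal (indicator {b..} x *\<^sub>R ?f x)
      = (\<Sum>k. ennreal (pois (a\<^sup>2 / 2) k) * (ennreal (x * pois (x\<^sup>2 / 2) k) * indicator {b..} x))"
    proof (cases "b \<le> x")
      case True
      then have x: "0 \<le> x" using b by simp
      have "ennreal (indicator {b..} x *\<^sub>R ?f x) = ennreal (\<Sum>k. ?t k x)" using True ser by simp
      also have "\<dots> = (\<Sum>k. ennreal (?t k x))"
        using x by (intro suminf_ennreal2[symmetric] tsumm) (auto intro!: mult_nonneg_nonneg pois_nonneg)
      also have "\<dots> = (\<Sum>k. ennreal (pois (a\<^sup>2 / 2) k) * (ennreal (x * pois (x\<^sup>2 / 2) k) * indicator {b..} x))"
        using True x by (simp add: ennreal_mult pois_nonneg)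
      finally show ?thesis .
    qed simp
  qed
  also have "\<dots> = (\<Sum>k. \<integral>\<^sup>+x. ennreal (pois (a\<^sup>2 / 2) k) * (ennreal (x * pois (x\<^sup>2 / 2) k) * indicator {b..} x) \<partial>lborel)"
    by (rule nn_integral_suminf) (unfold pois_def, measurable)
  also have "\<dots> = (\<Sum>k. ennreal (?S k))"
  proof -
    have "(\<integral>\<^sup>+x. ennreal (pois (a\<^sup>2 / 2) k) * (ennreal (x * pois (x\<^sup>2 / 2) k) * indicator {b..} x) \<partial>lborel)
       = ennreal (pois (a\<^sup>2 / 2) k) * (\<integral>\<^sup>+x. ennreal (x * pois (x\<^sup>2 / 2) k) * indicator {b..} x \<partial>lborel)" for k
      by (rule nn_integral_cmult) (unfold pois_def, measurable)
    then show ?thesis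
      by (simp add: marcum_term[OF b] ennreal_mult pois_nonneg sum_nonneg)
  qed
  also have "\<dots> = ennreal (suminf ?S)"
    by (intro suminf_ennreal2 summ) (simp add: pois_nonneg sum_nonneg)
  finally have "marcumQ a b = suminf ?S"
    by (simp add: suminf_nonneg summ pois_nonneg sum_nonneg)
  then show ?thesis using summ by (simp add: summable_sums)
qed



lemma inner_sums:
  assumes b: "0 \<le> \<beta>"
  shows "(\<lambda>j. pois \<beta> j * Wt q k j) sums ((1 - (\<Sum>j\<le>k. pois \<beta> j)) + q * pois \<beta> k)"
proof -
  have eq: "pois \<beta> j * Wt q k j = (pois \<beta> j - (if j \<in> {..k} then pois \<beta> j else 0)) + (if j = k then q * pois \<beta> k else 0)" for j
    by (auto simp: Wt_def)
  have "(\<lambda>j. (pois \<beta> j - (if j \<in> {..k} then pois \<beta> j else 0)) + (if j = k then q * pois \<beta> k else 0))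
      sums ((1 - (\<Sum>j\<le>k. pois \<beta> j)) + q * pois \<beta> k)"
    by (intro sums_add sums_diff pois_sums sums_If_finite_set) (auto intro: sums_single[of k "\<lambda>_. q * pois \<beta> k", simplified])
  then show ?thesis unfolding eq .
qed

lemma V_bounds:
  assumes b: "0 \<le> \<beta>" and q: "0 \<le> q" "q \<le> 1"
  shows "0 \<le> (1 - (\<Sum>j\<le>k. pois \<beta> j)) + q * pois \<beta> k" "(1 - (\<Sum>j\<le>k. pois \<beta> j)) + q * pois \<beta> k \<le> 2"
proof -
  have "0 \<le> (\<Sum>j\<le>k. pois \<beta> j)" using b by (simp add: sum_nonneg pois_nonneg)
  moreover have "(\<Sum>j\<le>k. pois \<beta> j) \<le> 1" by (rule pois_partial_le[OF b])
  moreover have "pois \<beta> k \<le> 1"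
  proof -
    have "pois \<beta> k \<le> (\<Sum>j\<le>k. pois \<beta> j)" by (rule member_le_sum) (auto simp: pois_nonneg b)
    then show ?thesis using \<open>(\<Sum>j\<le>k. pois \<beta> j) \<le> 1\<close> by simp
  qed
  moreover have "0 \<le> pois \<beta> k" using b by (rule pois_nonneg)
  ultimately show "0 \<le> (1 - (\<Sum>j\<le>k. pois \<beta> j)) + q * pois \<beta> k" "(1 - (\<Sum>j\<le>k. pois \<beta> j)) + q * pois \<beta> k \<le> 2"
    using q by (auto intro!: add_nonneg_nonneg mult_nonneg_nonneg) (smt (verit) mult_le_one)
qed

lemma double_sum_value:
  assumes a: "0 \<le> \<alpha>" and b: "0 \<le> \<beta>" and q: "0 \<le> q" "q \<le> 1"
  defines "Vk \<equiv> \<lambda>k. (1 - (\<Sum>j\<le>k. pois \<beta> j)) + q * pois \<beta> k"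
  shows "(\<Sum>k. \<Sum>j. ennreal (pois \<alpha> k * pois \<beta> j * Wt q k j)) = ennreal (\<Sum>k. pois \<alpha> k * Vk k)"
    and "summable (\<lambda>k. pois \<alpha> k * Vk k)" and "0 \<le> (\<Sum>k. pois \<alpha> k * Vk k)"
proof -
  have V0: "0 \<le> Vk k" and V2: "Vk k \<le> 2" for k using V_bounds[OF b q] by (auto simp: Vk_def)
  show summ: "summable (\<lambda>k. pois \<alpha> k * Vk k)"
  proof (rule summable_comparison_test[OF _ summable_mult[OF pois_summable, of 2]])
    show "\<exists>N. \<forall>n\<ge>N. norm (pois \<alpha> n * Vk n) \<le> 2 * pois \<alpha> n"
    proof (intro exI allI impI)
      fix n :: nat
      have "pois \<alpha> n * Vk n \<le> pois \<alpha> n * 2"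
        using V2[of n] a by (intro mult_left_mono) (auto simp: pois_nonneg)
      then show "norm (pois \<alpha> n * Vk n) \<le> 2 * pois \<alpha> n"
        using V0[of n] a by (simp add: abs_mult pois_nonneg)
    qed
  qed
  have inner: "(\<Sum>j. ennreal (pois \<alpha> k * pois \<beta> j * Wt q k j)) = ennreal (pois \<alpha> k * Vk k)" for k
  proof -
    have "(\<lambda>j. pois \<alpha> k * (pois \<beta> j * Wt q k j)) sums (pois \<alpha> k * Vk k)"
      unfolding Vk_def by (intro sums_mult inner_sums b)
    then have "(\<lambda>j. ennreal (pois \<alpha> k * pois \<beta> j * Wt q k j)) sums ennreal (pois \<alpha> k * Vk k)"
      using a b q V0 by (subst sums_ennreal) (auto simp: mult.assoc intro!: mult_nonneg_nonneg pois_nonneg Wt_nonneg)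
    then show ?thesis by (rule sums_unique[symmetric])
  qed
  show "(\<Sum>k. \<Sum>j. ennreal (pois \<alpha> k * pois \<beta> j * Wt q k j)) = ennreal (\<Sum>k. pois \<alpha> k * Vk k)"
    unfolding inner using a V0 by (intro suminf_ennreal2 summ) (auto intro!: mult_nonneg_nonneg pois_nonneg)
  show "0 \<le> (\<Sum>k. pois \<alpha> k * Vk k)"
    using a V0 by (intro suminf_nonneg summ) (auto intro!: mult_nonneg_nonneg pois_nonneg)
qed

lemma pois_prod_sums:
  assumes a: "0 \<le> \<alpha>" and b: "0 \<le> \<beta>"
  shows "(\<lambda>k. pois \<alpha> k * pois \<beta> k) sums (exp (- (\<alpha> + \<beta>)) * besselI0 (2 * sqrt (\<alpha> * \<beta>)))"
proof -
  have "(\<lambda>k. exp (- (\<alpha> + \<beta>)) * ((\<alpha> * \<beta>) ^ k / (fact k)\<^sup>2)) sums (exp (- (\<alpha> + \<beta>)) * (\<Sum>k. (\<alpha> * \<beta>) ^ k / (fact k)\<^sup>2))"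
    by (intro sums_mult summable_sums summable_bessel)
  moreover have "(\<Sum>k. (\<alpha> * \<beta>) ^ k / (fact k)\<^sup>2) = besselI0 (2 * sqrt (\<alpha> * \<beta>))"
    using a b by (simp add: besselI0_def power_mult_distrib)
  moreover have "exp (- (\<alpha> + \<beta>)) * ((\<alpha> * \<beta>) ^ k / (fact k)\<^sup>2) = pois \<alpha> k * pois \<beta> k" for k
    by (simp add: pois_def power2_eq_square power_mult_distrib mult_exp_exp algebra_simps)
  ultimately show ?thesis by simp
qed

lemma LL_value:
  assumes a: "0 \<le> \<alpha>" and b: "0 \<le> \<beta>" and q: "0 \<le> q" "q \<le> 1"
  shows "(\<Sum>k. pois \<alpha> k * ((1 - (\<Sum>j\<le>k. pois \<beta> j)) + q * pois \<beta> k))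
     = 1 - marcumQ (sqrt (2 * \<alpha>)) (sqrt (2 * \<beta>)) + q * (exp (- (\<alpha> + \<beta>)) * besselI0 (2 * sqrt (\<alpha> * \<beta>)))"
proof -
  have m: "(\<lambda>k. pois \<alpha> k * (\<Sum>j\<le>k. pois \<beta> j)) sums marcumQ (sqrt (2 * \<alpha>)) (sqrt (2 * \<beta>))"
    using marcum_series[of "sqrt (2 * \<alpha>)" "sqrt (2 * \<beta>)"] a b by simp
  have "(\<lambda>k. (pois \<alpha> k - pois \<alpha> k * (\<Sum>j\<le>k. pois \<beta> j)) + q * (pois \<alpha> k * pois \<beta> k))
      sums ((1 - marcumQ (sqrt (2 * \<alpha>)) (sqrt (2 * \<beta>))) + q * (exp (- (\<alpha> + \<beta>)) * besselI0 (2 * sqrt (\<alpha> * \<beta>))))"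
    by (intro sums_add sums_diff pois_sums m sums_mult pois_prod_sums a b)
  then show ?thesis
    by (simp add: sums_iff algebra_simps)
qed



lemma pull:
  fixes f g :: "real \<Rightarrow> real"
  assumes f[measurable]: "f \<in> borel_measurable borel" and g[measurable]: "g \<in> borel_measurable borel"
    and f0: "\<And>x. 0 \<le> f x" and g0: "\<And>x. 0 \<le> g x" and p: "0 \<le> p" and p': "0 \<le> p'"
  shows "(\<integral>\<^sup>+u. ennreal (p * f u) * (\<integral>\<^sup>+v. ennreal (p' * g v) * indicator {v. u * bm / (v * bI) < gt} v \<partial>lborel) \<partial>lborel)
     = ennreal (p * p') * (\<integral>\<^sup>+u. ennreal (f u) * (\<integral>\<^sup>+v. ennreal (g v) * indicator {v. u * bm / (v * bI) < gt} v \<partial>lborel) \<partial>lborel)"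
proof -
  have inner: "(\<integral>\<^sup>+v. ennreal (p' * g v) * indicator {v. u * bm / (v * bI) < gt} v \<partial>lborel)
      = ennreal p' * (\<integral>\<^sup>+v. ennreal (g v) * indicator {v. u * bm / (v * bI) < gt} v \<partial>lborel)" for u
  proof -
    have "(\<integral>\<^sup>+v. ennreal (p' * g v) * indicator {v. u * bm / (v * bI) < gt} v \<partial>lborel)
      = (\<integral>\<^sup>+v. ennreal p' * (ennreal (g v) * indicator {v. u * bm / (v * bI) < gt} v) \<partial>lborel)"
      by (intro nn_integral_cong) (simp add: ennreal_mult'[OF p'] mult.assoc)
    also have "\<dots> = ennreal p' * (\<integral>\<^sup>+v. ennreal (g v) * indicator {v. u * bm / (v * bI) < gt} v \<partial>lborel)"
      by (rule nn_integral_cmult) measurable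
    finally show ?thesis .
  qed
  have "(\<integral>\<^sup>+u. ennreal (p * f u) * (\<integral>\<^sup>+v. ennreal (p' * g v) * indicator {v. u * bm / (v * bI) < gt} v \<partial>lborel) \<partial>lborel)
     = (\<integral>\<^sup>+u. ennreal (p * p') * (ennreal (f u) * (\<integral>\<^sup>+v. ennreal (g v) * indicator {v. u * bm / (v * bI) < gt} v \<partial>lborel)) \<partial>lborel)"
    unfolding inner using p p' by (intro nn_integral_cong) (simp add: ennreal_mult ennreal_mult' f0 mult_ac)
  also have "\<dots> = ennreal (p * p') * (\<integral>\<^sup>+u. ennreal (f u) * (\<integral>\<^sup>+v. ennreal (g v) * indicator {v. u * bm / (v * bI) < gt} v \<partial>lborel) \<partial>lborel)"
    by (rule nn_integral_cmult) measurable
  finally show ?thesis .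
qed

lemma sum_pois0: "(\<Sum>k. pois 0 k * f k) = f 0"
proof -
  have "(\<Sum>k. pois 0 k * f k) = (\<Sum>k\<in>{0}. pois 0 k * f k)"
    by (rule suminf_finite) (auto simp: pois_0)
  then show ?thesis by (simp add: pois_0)
qed

lemma fLoS_eq: "0 \<le> K \<Longrightarrow> fLoS K = mix K (1/2)"
  by (rule ext) (rule fLoS_mix)

lemma fNLoS_eq: "fNLoS = mix 0 1"
  by (rule ext) (rule fNLoS_mix)

lemma LL_case:
  assumes Km: "0 < Km" and KI: "0 < KI" and bm: "0 < bm" and bI: "0 < bI" and gt: "0 < gt"
  shows "(\<integral>\<^sup>+u. ennreal (fLoS Km u) * (\<integral>\<^sup>+v. ennreal (fLoS KI v) * indicator {v. u * bm / (v * bI) < gt} v \<partial>lborel) \<partial>lborel)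
     = ennreal (po_LL bm bI gt Km KI)" and "0 \<le> po_LL bm bI gt Km KI"
proof -
  define s where "s = bm + gt * bI"
  have s: "0 < s" using bm bI gt by (simp add: s_def add_pos_pos)
  define q where "q = (1/2) / ((1/2) + (1/2) / (gt * bI / bm))"
  have qv: "q = gt * bI / s" using bm bI gt by (simp add: q_def s_def field_simps)
  have q01: "0 \<le> q" "q \<le> 1" using bm bI gt s by (auto simp: qv s_def)
  have 1: "1 - q = bm / s" using s by (simp add: qv s_def field_simps)
  define \<alpha> where "\<alpha> = Km * (1 - q)"
  define \<beta> where "\<beta> = KI * q"
  have a: "0 \<le> \<alpha>" and b: "0 \<le> \<beta>" using Km KI q01 by (auto simp: \<alpha>_def \<beta>_def)
  have e1: "2 * \<alpha> = 2 * Km * bm / (bm + gt * bI)" by (simp add: \<alpha>_def 1 s_def)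
  have e2: "2 * \<beta> = 2 * gt * KI * bI / (bm + gt * bI)" by (simp add: \<beta>_def qv s_def)
  have e3: "\<alpha> + \<beta> = (Km * bm + gt * KI * bI) / (bm + gt * bI)"
    unfolding \<alpha>_def \<beta>_def 1 by (simp add: qv s_def add_divide_distrib mult_ac)
  have e3': "- (\<alpha> + \<beta>) = - (Km * bm + gt * KI * bI) / (bm + gt * bI)"
    unfolding e3 by (simp add: minus_divide_left)
  have e4: "2 * sqrt (\<alpha> * \<beta>) = 2 * bm / (bm + gt * bI) * sqrt (gt * Km * KI * bI / bm)"
  proof -
    have "\<alpha> * \<beta> = (bm / s)\<^sup>2 * (gt * Km * KI * bI / bm)"
      using bm s by (simp add: \<alpha>_def \<beta>_def 1 qv power2_eq_square field_simps) (simp add: s_def algebra_simps)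
    then have "sqrt (\<alpha> * \<beta>) = sqrt ((bm / s)\<^sup>2) * sqrt (gt * Km * KI * bI / bm)"
      by (simp only: real_sqrt_mult)
    then have "sqrt (\<alpha> * \<beta>) = (bm / s) * sqrt (gt * Km * KI * bI / bm)"
      using bm s by (simp only: real_sqrt_abs) simp
    then show ?thesis by (simp add: s_def)
  qed
  have "(\<integral>\<^sup>+u. ennreal (fLoS Km u) * (\<integral>\<^sup>+v. ennreal (fLoS KI v) * indicator {v. u * bm / (v * bI) < gt} v \<partial>lborel) \<partial>lborel)
     = (\<Sum>k. \<Sum>j. ennreal (pois \<alpha> k * pois \<beta> j * Wt q k j))"
    unfolding fLoS_eq[OF less_imp_le[OF Km]] fLoS_eq[OF less_imp_le[OF KI]] \<alpha>_def \<beta>_def q_def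
    using Km KI bm bI gt by (intro double_mix) auto
  also have "\<dots> = ennreal (\<Sum>k. pois \<alpha> k * ((1 - (\<Sum>j\<le>k. pois \<beta> j)) + q * pois \<beta> k))"
    by (rule double_sum_value(1)[OF a b q01])
  also have "(\<Sum>k. pois \<alpha> k * ((1 - (\<Sum>j\<le>k. pois \<beta> j)) + q * pois \<beta> k)) = po_LL bm bI gt Km KI"
    unfolding LL_value[OF a b q01] po_LL_def e1[symmetric] e2[symmetric] e3'[symmetric] e4[symmetric]
    by (simp add: qv s_def)
  finally show "(\<integral>\<^sup>+u. ennreal (fLoS Km u) * (\<integral>\<^sup>+v. ennreal (fLoS KI v) * indicator {v. u * bm / (v * bI) < gt} v \<partial>lborel) \<partial>lborel)
     = ennreal (po_LL bm bI gt Km KI)" .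
  show "0 \<le> po_LL bm bI gt Km KI"
    using double_sum_value(3)[OF a b q01] \<open>(\<Sum>k. _) = po_LL bm bI gt Km KI\<close> by simp
qed


lemma pois0_partial: "(\<Sum>j\<le>k. pois 0 j) = 1"
  by (simp add: pois_0 sum.delta)

lemma LN_case:
  assumes Km: "0 < Km" and bm: "0 < bm" and bI: "0 < bI" and gt: "0 < gt"
  shows "(\<integral>\<^sup>+u. ennreal (fLoS Km u) * (\<integral>\<^sup>+v. ennreal (fNLoS v) * indicator {v. u * bm / (v * bI) < gt} v \<partial>lborel) \<partial>lborel)
     = ennreal (po_LN bm bI gt Km)" and "0 \<le> po_LN bm bI gt Km"
proof -
  define s where "s = 2 * bm + gt * bI"
  have s: "0 < s" using bm bI gt by (simp add: s_def add_pos_pos)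
  define q where "q = (1/2) / ((1/2) + 1 / (gt * bI / bm))"
  have qv: "q = gt * bI / s" using bm bI gt by (simp add: q_def s_def field_simps)
  have q01: "0 \<le> q" "q \<le> 1" using bm bI gt s by (auto simp: qv s_def)
  have 1: "1 - q = 2 * bm / s" using s by (simp add: qv s_def field_simps)
  define \<alpha> where "\<alpha> = Km * (1 - q)"
  have a: "0 \<le> \<alpha>" using Km q01 by (auto simp: \<alpha>_def)
  have "(\<integral>\<^sup>+u. ennreal (fLoS Km u) * (\<integral>\<^sup>+v. ennreal (fNLoS v) * indicator {v. u * bm / (v * bI) < gt} v \<partial>lborel) \<partial>lborel)
     = (\<Sum>k. \<Sum>j. ennreal (pois \<alpha> k * pois (0 * q) j * Wt q k j))"
    unfolding fLoS_eq[OF less_imp_le[OF Km]] fNLoS_eq \<alpha>_def q_def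
    using Km bm bI gt by (intro double_mix) auto
  also have "\<dots> = ennreal (\<Sum>k. pois \<alpha> k * ((1 - (\<Sum>j\<le>k. pois (0 * q) j)) + q * pois (0 * q) k))"
    by (rule double_sum_value(1)[OF a _ q01]) simp
  also have "(\<Sum>k. pois \<alpha> k * ((1 - (\<Sum>j\<le>k. pois (0 * q) j)) + q * pois (0 * q) k)) = q * exp (- \<alpha>)"
  proof -
    have "(\<Sum>k. pois \<alpha> k * ((1 - (\<Sum>j\<le>k. pois (0 * q) j)) + q * pois (0 * q) k)) = (\<Sum>k\<in>{0}. pois \<alpha> k * ((1 - (\<Sum>j\<le>k. pois (0 * q) j)) + q * pois (0 * q) k))"
      by (rule suminf_finite) (auto simp: pois0_partial pois_0)
    then show ?thesis by (simp add: pois_0 pois_def)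
  qed
  also have "q * exp (- \<alpha>) = po_LN bm bI gt Km"
  proof -
    have "- \<alpha> = - (2 * Km * bm) / (2 * bm + gt * bI)"
      unfolding \<alpha>_def 1 s_def by simp
    then show ?thesis unfolding po_LN_def qv s_def by simp
  qed
  finally show "(\<integral>\<^sup>+u. ennreal (fLoS Km u) * (\<integral>\<^sup>+v. ennreal (fNLoS v) * indicator {v. u * bm / (v * bI) < gt} v \<partial>lborel) \<partial>lborel)
     = ennreal (po_LN bm bI gt Km)" .
  show "0 \<le> po_LN bm bI gt Km" using bm bI gt by (simp add: po_LN_def add_pos_pos)
qed

lemma NL_case:
  assumes KI: "0 < KI" and bm: "0 < bm" and bI: "0 < bI" and gt: "0 < gt"
  shows "(\<integral>\<^sup>+u. ennreal (fNLoS u) * (\<integral>\<^sup>+v. ennreal (fLoS KI v) * indicator {v. u * bm / (v * bI) < gt} v \<partial>lborel) \<partial>lborel)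
     = ennreal (po_NL bm bI gt KI)" and "0 \<le> po_NL bm bI gt KI"
proof -
  define s where "s = 2 * gt * bI + bm"
  have s: "0 < s" using bm bI gt by (simp add: s_def add_pos_pos)
  define q where "q = 1 / (1 + (1/2) / (gt * bI / bm))"
  have qv: "q = 2 * gt * bI / s" using bm bI gt by (simp add: q_def s_def field_simps)
  have q01: "0 \<le> q" "q \<le> 1" using bm bI gt s by (auto simp: qv s_def)
  have 1: "1 - q = bm / s" using s by (simp add: qv s_def field_simps)
  define \<beta> where "\<beta> = KI * q"
  have b: "0 \<le> \<beta>" using KI q01 by (auto simp: \<beta>_def)
  have "(\<integral>\<^sup>+u. ennreal (fNLoS u) * (\<integral>\<^sup>+v. ennreal (fLoS KI v) * indicator {v. u * bm / (v * bI) < gt} v \<partial>lborel) \<partial>lborel)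
     = (\<Sum>k. \<Sum>j. ennreal (pois (0 * (1 - q)) k * pois \<beta> j * Wt q k j))"
    unfolding fLoS_eq[OF less_imp_le[OF KI]] fNLoS_eq \<beta>_def q_def
    using KI bm bI gt by (intro double_mix) auto
  also have "\<dots> = ennreal (\<Sum>k. pois (0 * (1 - q)) k * ((1 - (\<Sum>j\<le>k. pois \<beta> j)) + q * pois \<beta> k))"
    by (rule double_sum_value(1)[OF _ b q01]) simp
  also have "(\<Sum>k. pois (0 * (1 - q)) k * ((1 - (\<Sum>j\<le>k. pois \<beta> j)) + q * pois \<beta> k)) = 1 - (1 - q) * exp (- \<beta>)"
    using sum_pois0[of "\<lambda>k. (1 - (\<Sum>j\<le>k. pois \<beta> j)) + q * pois \<beta> k"]
    by (simp add: pois_def algebra_simps)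
  also have "1 - (1 - q) * exp (- \<beta>) = po_NL bm bI gt KI"
  proof -
    have "- \<beta> = - (2 * gt * KI * bI) / (2 * gt * bI + bm)"
      unfolding \<beta>_def qv s_def by simp
    then show ?thesis unfolding po_NL_def 1 s_def by simp
  qed
  finally show "(\<integral>\<^sup>+u. ennreal (fNLoS u) * (\<integral>\<^sup>+v. ennreal (fLoS KI v) * indicator {v. u * bm / (v * bI) < gt} v \<partial>lborel) \<partial>lborel)
     = ennreal (po_NL bm bI gt KI)" .
  have "(1 - q) * exp (- \<beta>) \<le> 1 * 1"
    using q01 b by (intro mult_mono) auto
  then show "0 \<le> po_NL bm bI gt KI" using \<open>1 - (1 - q) * exp (- \<beta>) = po_NL bm bI gt KI\<close> by simp
qed

lemma NN_case:
  assumes bm: "0 < bm" and bI: "0 < bI" and gt: "0 < gt"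
  shows "(\<integral>\<^sup>+u. ennreal (fNLoS u) * (\<integral>\<^sup>+v. ennreal (fNLoS v) * indicator {v. u * bm / (v * bI) < gt} v \<partial>lborel) \<partial>lborel)
     = ennreal (po_NN bm bI gt)" and "0 \<le> po_NN bm bI gt"
proof -
  define q where "q = 1 / (1 + 1 / (gt * bI / bm))"
  have qv: "q = gt * bI / (bm + gt * bI)" using bm bI gt by (simp add: q_def field_simps)
  have q01: "0 \<le> q" "q \<le> 1" using bm bI gt by (auto simp: qv add_pos_pos)
  have "(\<integral>\<^sup>+u. ennreal (fNLoS u) * (\<integral>\<^sup>+v. ennreal (fNLoS v) * indicator {v. u * bm / (v * bI) < gt} v \<partial>lborel) \<partial>lborel)
     = (\<Sum>k. \<Sum>j. ennreal (pois (0 * (1 - q)) k * pois (0 * q) j * Wt q k j))"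
    unfolding fNLoS_eq q_def
    using bm bI gt by (intro double_mix) auto
  also have "\<dots> = ennreal (\<Sum>k. pois (0 * (1 - q)) k * ((1 - (\<Sum>j\<le>k. pois (0 * q) j)) + q * pois (0 * q) k))"
    by (rule double_sum_value(1)[OF _ _ q01]) simp_all
  also have "(\<Sum>k. pois (0 * (1 - q)) k * ((1 - (\<Sum>j\<le>k. pois (0 * q) j)) + q * pois (0 * q) k)) = q"
    using sum_pois0[of "\<lambda>k. (1 - (\<Sum>j\<le>k. pois 0 j)) + q * pois 0 k"]
    by (simp add: pois_0)
  finally show "(\<integral>\<^sup>+u. ennreal (fNLoS u) * (\<integral>\<^sup>+v. ennreal (fNLoS v) * indicator {v. u * bm / (v * bI) < gt} v \<partial>lborel) \<partial>lborel)
     = ennreal (po_NN bm bI gt)" by (simp add: po_NN_def qv)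
  show "0 \<le> po_NN bm bI gt" using bm bI gt by (simp add: po_NN_def)
qed



theorem theorem1:
  fixes M :: "'a measure"
    and Em EI :: "'a \<Rightarrow> bool" \<comment> \<open>True = link in LoS environment\<close>
    and hm hI :: "'a \<Rightarrow> real"
    and bm bI gt pm pI Km KI :: real
  assumes "prob_space M"
    and "bm > 0" "bI > 0" "gt > 0"
    and "0 \<le> pm" "pm \<le> 1" "0 \<le> pI" "pI \<le> 1"
    and "Km > 0" "KI > 0"
    and "Em \<in> measurable M (count_space UNIV)" "EI \<in> measurable M (count_space UNIV)"
    and "hm \<in> borel_measurable M" "hI \<in> borel_measurable M"
    and indep: "prob_space.indep_var M
                  (count_space UNIV \<Otimes>\<^sub>M borel) (\<lambda>x. (Em x, hm x))
                  (count_space UNIV \<Otimes>\<^sub>M borel) (\<lambda>x. (EI x, hI x))"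
    and lawmL: "\<And>A. A \<in> sets borel \<Longrightarrow>
       measure M {x \<in> space M. Em x \<and> hm x \<in> A} = pm * (LINT h:A|lborel. fLoS Km h)"
    and lawmN: "\<And>A. A \<in> sets borel \<Longrightarrow>
       measure M {x \<in> space M. \<not> Em x \<and> hm x \<in> A} = (1 - pm) * (LINT h:A|lborel. fNLoS h)"
    and lawIL: "\<And>A. A \<in> sets borel \<Longrightarrow>
       measure M {x \<in> space M. EI x \<and> hI x \<in> A} = pI * (LINT h:A|lborel. fLoS KI h)"
    and lawIN: "\<And>A. A \<in> sets borel \<Longrightarrow>
       measure M {x \<in> space M. \<not> EI x \<and> hI x \<in> A} = (1 - pI) * (LINT h:A|lborel. fNLoS h)"
  shows
    "let out = {x \<in> space M. hm x * bm / (hI x * bI) < gt} in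
       measure M out =
           pm * pI * po_LL bm bI gt Km KI
         + pm * (1 - pI) * po_LN bm bI gt Km
         + (1 - pm) * pI * po_NL bm bI gt KI
         + (1 - pm) * (1 - pI) * po_NN bm bI gt
     \<and> measure M {x \<in> out. Em x \<and> EI x} = pm * pI * po_LL bm bI gt Km KI
     \<and> measure M {x \<in> out. Em x \<and> \<not> EI x} = pm * (1 - pI) * po_LN bm bI gt Km
     \<and> measure M {x \<in> out. \<not> Em x \<and> EI x} = (1 - pm) * pI * po_NL bm bI gt KI
     \<and> measure M {x \<in> out. \<not> Em x \<and> \<not> EI x} = (1 - pm) * (1 - pI) * po_NN bm bI gt"
proof -
  note M = assms(1)
  interpret prob_space M by (rule M)
  have bm: "0 < bm" and bI: "0 < bI" and gt: "0 < gt" using assms(2-4) by auto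
  have pm: "0 \<le> pm" "pm \<le> 1" and pI: "0 \<le> pI" "pI \<le> 1" using assms(5-8) by auto
  have Km: "0 < Km" and KI: "0 < KI" using assms(9,10) by auto
  have totLm: "(\<integral>\<^sup>+x. ennreal (fLoS Km x) \<partial>lborel) = 1"
    unfolding fLoS_eq[OF less_imp_le[OF Km]] by (rule mix_total) (use Km in auto)
  have totLI: "(\<integral>\<^sup>+x. ennreal (fLoS KI x) \<partial>lborel) = 1"
    unfolding fLoS_eq[OF less_imp_le[OF KI]] by (rule mix_total) (use KI in auto)
  have totN: "(\<integral>\<^sup>+x. ennreal (fNLoS x) \<partial>lborel) = 1"
    unfolding fNLoS_eq by (rule mix_total) auto
  note D1 = density_D[OF M assms(11) assms(13) fLoS_measurable fLoS_nonneg[OF less_imp_le[OF Km]] totLm fNLoS_measurable fNLoS_nonneg totN pm lawmL lawmN]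
  note D2 = density_D[OF M assms(12) assms(14) fLoS_measurable fLoS_nonneg[OF less_imp_le[OF KI]] totLI fNLoS_measurable fNLoS_nonneg totN pI lawIL lawIN]
  have m1: "(\<lambda>h. pm * fLoS Km h) \<in> borel_measurable borel" by measurable
  have m2: "(\<lambda>h. (1 - pm) * fNLoS h) \<in> borel_measurable borel" by measurable
  have m3: "(\<lambda>h. pI * fLoS KI h) \<in> borel_measurable borel" by measurable
  have m4: "(\<lambda>h. (1 - pI) * fNLoS h) \<in> borel_measurable borel" by measurable
  note JB = joint_block[OF M assms(11,12,13,14) indep m1 m2 m3 m4 D1 D2]
  define I where "I a b = (\<integral>\<^sup>+u. ennreal (if a then pm * fLoS Km u else (1 - pm) * fNLoS u) *
             (\<integral>\<^sup>+v. ennreal (if b then pI * fLoS KI v else (1 - pI) * fNLoS v) * indicator {v. u * bm / (v * bI) < gt} v \<partial>lborel) \<partial>lborel)" for a b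
  have blk: "emeasure M {x \<in> space M. P (Em x) (EI x) \<and> hm x * bm / (hI x * bI) < gt}
     = (\<Sum>a\<in>UNIV. \<Sum>b\<in>UNIV. if P a b then I a b else 0)" for P
    unfolding I_def by (rule JB)
  have KmL: "0 \<le> Km" and KIL: "0 \<le> KI" using Km KI by auto
  have pm1: "0 \<le> 1 - pm" and pI1: "0 \<le> 1 - pI" using pm pI by auto
  have ITT: "I True True = ennreal (pm * pI * po_LL bm bI gt Km KI)"
    unfolding I_def using pull[OF fLoS_measurable fLoS_measurable fLoS_nonneg[OF KmL] fLoS_nonneg[OF KIL] pm(1) pI(1), of bm bI gt]
    by (simp add: LL_case[OF Km KI bm bI gt] ennreal_mult' LL_case(2)[OF Km KI bm bI gt] pm pI)
  have ITF: "I True False = ennreal (pm * (1 - pI) * po_LN bm bI gt Km)"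
    unfolding I_def using pull[OF fLoS_measurable fNLoS_measurable fLoS_nonneg[OF KmL] fNLoS_nonneg pm(1) pI1, of bm bI gt]
    by (simp add: LN_case[OF Km bm bI gt] ennreal_mult' LN_case(2)[OF Km bm bI gt] pm pI)
  have IFT: "I False True = ennreal ((1 - pm) * pI * po_NL bm bI gt KI)"
    unfolding I_def using pull[OF fNLoS_measurable fLoS_measurable fNLoS_nonneg fLoS_nonneg[OF KIL] pm1 pI(1), of bm bI gt]
    by (simp add: NL_case[OF KI bm bI gt] ennreal_mult' NL_case(2)[OF KI bm bI gt] pm pI)
  have IFF: "I False False = ennreal ((1 - pm) * (1 - pI) * po_NN bm bI gt)"
    unfolding I_def using pull[OF fNLoS_measurable fNLoS_measurable fNLoS_nonneg fNLoS_nonneg pm1 pI1, of bm bI gt]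
    by (simp add: NN_case[OF bm bI gt] ennreal_mult' NN_case(2)[OF bm bI gt] pm pI)
  have n1: "0 \<le> pm * pI * po_LL bm bI gt Km KI" using LL_case(2)[OF Km KI bm bI gt] pm pI by simp
  have n2: "0 \<le> pm * (1 - pI) * po_LN bm bI gt Km" using LN_case(2)[OF Km bm bI gt] pm pI by simp
  have n3: "0 \<le> (1 - pm) * pI * po_NL bm bI gt KI" using NL_case(2)[OF KI bm bI gt] pm pI by simp
  have n4: "0 \<le> (1 - pm) * (1 - pI) * po_NN bm bI gt" using NN_case(2)[OF bm bI gt] pm pI by simp
  have meas: "measure M A = v" if "emeasure M A = ennreal v" "0 \<le> v" for A v
    using that by (simp add: measure_def)
  let ?out = "{x \<in> space M. hm x * bm / (hI x * bI) < gt}"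
  have e0: "measure M ?out = pm * pI * po_LL bm bI gt Km KI
         + pm * (1 - pI) * po_LN bm bI gt Km
         + (1 - pm) * pI * po_NL bm bI gt KI
         + (1 - pm) * (1 - pI) * po_NN bm bI gt"
  proof (rule meas)
    have "emeasure M ?out = emeasure M {x \<in> space M. (\<lambda>a b. True) (Em x) (EI x) \<and> hm x * bm / (hI x * bI) < gt}"
      by simp
    also have "\<dots> = I True True + I True False + I False True + I False False"
      using blk[of "\<lambda>a b. True"] by (simp add: UNIV_bool add_ac)
    finally show "emeasure M ?out = ennreal (pm * pI * po_LL bm bI gt Km KI
         + pm * (1 - pI) * po_LN bm bI gt Km
         + (1 - pm) * pI * po_NL bm bI gt KI
         + (1 - pm) * (1 - pI) * po_NN bm bI gt)"
      using n1 n2 n3 n4 by (simp add: ITT ITF IFT IFF ennreal_plus[symmetric] del: ennreal_plus)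
    show "0 \<le> pm * pI * po_LL bm bI gt Km KI
         + pm * (1 - pI) * po_LN bm bI gt Km
         + (1 - pm) * pI * po_NL bm bI gt KI
         + (1 - pm) * (1 - pI) * po_NN bm bI gt"
      using n1 n2 n3 n4 by simp
  qed
  have e1: "measure M {x \<in> ?out. Em x \<and> EI x} = pm * pI * po_LL bm bI gt Km KI"
  proof (rule meas[OF _ n1])
    have "{x \<in> ?out. Em x \<and> EI x} = {x \<in> space M. (\<lambda>a b. a \<and> b) (Em x) (EI x) \<and> hm x * bm / (hI x * bI) < gt}"
      by auto
    then show "emeasure M {x \<in> ?out. Em x \<and> EI x} = ennreal (pm * pI * po_LL bm bI gt Km KI)"
      using blk[of "\<lambda>a b. a \<and> b"] by (simp add: UNIV_bool ITT)
  qed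
  have e2: "measure M {x \<in> ?out. Em x \<and> \<not> EI x} = pm * (1 - pI) * po_LN bm bI gt Km"
  proof (rule meas[OF _ n2])
    have "{x \<in> ?out. Em x \<and> \<not> EI x} = {x \<in> space M. (\<lambda>a b. a \<and> \<not> b) (Em x) (EI x) \<and> hm x * bm / (hI x * bI) < gt}"
      by auto
    then show "emeasure M {x \<in> ?out. Em x \<and> \<not> EI x} = ennreal (pm * (1 - pI) * po_LN bm bI gt Km)"
      using blk[of "\<lambda>a b. a \<and> \<not> b"] by (simp add: UNIV_bool ITF)
  qed
  have e3: "measure M {x \<in> ?out. \<not> Em x \<and> EI x} = (1 - pm) * pI * po_NL bm bI gt KI"
  proof (rule meas[OF _ n3])
    have "{x \<in> ?out. \<not> Em x \<and> EI x} = {x \<in> space M. (\<lambda>a b. \<not> a \<and> b) (Em x) (EI x) \<and> hm x * bm / (hI x * bI) < gt}"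
      by auto
    then show "emeasure M {x \<in> ?out. \<not> Em x \<and> EI x} = ennreal ((1 - pm) * pI * po_NL bm bI gt KI)"
      using blk[of "\<lambda>a b. \<not> a \<and> b"] by (simp add: UNIV_bool IFT)
  qed
  have e4: "measure M {x \<in> ?out. \<not> Em x \<and> \<not> EI x} = (1 - pm) * (1 - pI) * po_NN bm bI gt"
  proof (rule meas[OF _ n4])
    have "{x \<in> ?out. \<not> Em x \<and> \<not> EI x} = {x \<in> space M. (\<lambda>a b. \<not> a \<and> \<not> b) (Em x) (EI x) \<and> hm x * bm / (hI x * bI) < gt}"
      by auto
    then show "emeasure M {x \<in> ?out. \<not> Em x \<and> \<not> EI x} = ennreal ((1 - pm) * (1 - pI) * po_NN bm bI gt)"
      using blk[of "\<lambda>a b. \<not> a \<and> \<not> b"] by (simp add: UNIV_bool IFF)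
  qed
  show ?thesis unfolding Let_def using e0 e1 e2 e3 e4 by blast
qed


end
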